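(* Let $\Gamma$ be a uniform layered graph with unique minimal vertex, $n\ge2$, and let $L=\{b_1,\dots,b_{|V_n|}\}$ be a basis of $B_n$ such that for every $i$ and every vertex $a\in V_n$ with $a\notin\operatorname{span}\{b_1,\dots,b_{i-1}\}$ we have $\dim\kappa_{b_i}\ge\dim\kappa_a$. Then $L$ is an upper vertex-like basis of $B_n$.
   Context: A layered graph is a finite directed graph $\Gamma=(V,E)$ with $V=\bigsqcup_{i=0}^{N}V_i$ such that every edge from $V_i$ goes to $V_{i-1}$; $|v|=i$ for $v\in V_i$, $V_+=\bigsqcup_{i\ge1}V_i$, $V_{\ge k}=\bigsqcup_{i\ge k}V_i$, $S(v)=\{w:(v,w)\in E\}$, nonempty for $v\in V_+$, $|V_0|=1$. $\Gamma$ is uniform if for every $v\in V_{\ge2}$ the elements of $S(v)$ form a single class under the transitive closure of $w\approx u$ iff $S(w)\cap S(u)\ne\emptyset$. Over a field $\mathbb F$, $B(\Gamma)=T(V_+)/R_B$ with $R_B$ the two-sided ideal generated by $\{vw: v,w\in V_+,(v,w)\notin E\}\cup\{v\sum_{w\in S(v)}w: v\in V_{\ge2}\}$, doubly graded with $v_1\cdots v_m$ in bidegree $(m,\sum|v_i|)$; $B_n=\operatorname{span}V_n$ is the bidegree $(1,n)$ part. For $a\in B_n$, $\kappa_a=\ker(B_{n-1}\to B(\Gamma),b\mapsto ab)$. $B(\Gamma|_n)$ is the subalgebra generated by $\bigcup_{i=1}^nV_i$. A basis $L$ of $B_n$ is upper vertex-like if there is a doubly graded algebra automorphism of $B(\Gamma|_n)$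 fixing every vertex in $\bigcup_{i=1}^{n-1}V_i$ and mapping the set $V_n$ onto $L$. *)

theory Defs
  imports Main "HOL.Vector_Spaces" "HOL-Library.Function_Algebras"
begin

text \<open>A layered graph is given by a finite vertex set V, a level function lev
 (|v| = lev v) and an edge set E.  V_i = {v in V. lev v = i}.\<close>

definition layer :: "'v set \<Rightarrow> ('v \<Rightarrow> nat) \<Rightarrow> nat \<Rightarrow> 'v set" where
  "layer V lev i = {v \<in> V. lev v = i}"

definition succs :: "('v \<times> 'v) set \<Rightarrow> 'v \<Rightarrow> 'v set" where
  "succs E v = {w. (v, w) \<in> E}"

definition layered_graph :: "'v set \<Rightarrow> ('v \<Rightarrow> nat) \<Rightarrow> ('v \<times> 'v) set \<Rightarrow> bool" where
  "layered_graph V lev E \<longleftrightarrow>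
     finite V \<and>
     (\<forall>v w. (v, w) \<in> E \<longrightarrow> v \<in> V \<and> w \<in> V \<and> lev w + 1 = lev v) \<and>
     (\<forall>v \<in> V. 1 \<le> lev v \<longrightarrow> succs E v \<noteq> {}) \<and>
     card (layer V lev 0) = 1"

definition sim_rel :: "('v \<times> 'v) set \<Rightarrow> 'v \<Rightarrow> ('v \<times> 'v) set" where
  "sim_rel E v = {(w, u). w \<in> succs E v \<and> u \<in> succs E v \<and> succs E w \<inter> succs E u \<noteq> {}}"

definition uniform :: "'v set \<Rightarrow> ('v \<Rightarrow> nat) \<Rightarrow> ('v \<times> 'v) set \<Rightarrow> bool" where
  "uniform V lev E \<longleftrightarrow>
     (\<forall>v \<in> V. 2 \<le> lev v \<longrightarrow> (\<forall>w \<in> succs E v. \<forall>u \<in> succs E v. (w, u) \<in> (sim_rel E v)\<^sup>*))"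

text \<open>Elements of the free associative algebra are coefficient functions on words
  (finitely supported, see @tfin below); addition and scaling are pointwise.\<close>

definition mon :: "'v list \<Rightarrow> ('v list \<Rightarrow> 'a::field)" where
  "mon w = (\<lambda>u. if u = w then 1 else 0)"

definition tmult :: "('v list \<Rightarrow> 'a::field) \<Rightarrow> ('v list \<Rightarrow> 'a) \<Rightarrow> ('v list \<Rightarrow> 'a)" where
  "tmult p q = (\<lambda>w. \<Sum>i\<in>{0..length w}. p (take i w) * q (drop i w))"

definition tsupp :: "('v list \<Rightarrow> 'a::field) \<Rightarrow> 'v list set" where
  "tsupp p = {w. p w \<noteq> 0}"

text \<open>T(V_{\<le> n} \<inter> V_+): finitely supported elements whose words use only vertices of
  levels 1..n; with n large this is T(V_+).\<close>
definition TA :: "'v set \<Rightarrow> ('v \<Rightarrow> nat) \<Rightarrow> nat \<Rightarrow> ('v list \<Rightarrow> 'a::field) set" where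
  "TA V lev n = {p. finite (tsupp p) \<and>
      (\<forall>w \<in> tsupp p. \<forall>x \<in> set w. x \<in> V \<and> 1 \<le> lev x \<and> lev x \<le> n)}"

definition RB_gens :: "'v set \<Rightarrow> ('v \<Rightarrow> nat) \<Rightarrow> ('v \<times> 'v) set \<Rightarrow> ('v list \<Rightarrow> 'a::field) set" where
  "RB_gens V lev E =
     {mon [v, w] | v w. v \<in> V \<and> w \<in> V \<and> 1 \<le> lev v \<and> 1 \<le> lev w \<and> (v, w) \<notin> E}
   \<union> {(\<lambda>u. \<Sum>w\<in>succs E v. mon [v, w] u) | v. v \<in> V \<and> 2 \<le> lev v}"

inductive_set RB :: "'v set \<Rightarrow> ('v \<Rightarrow> nat) \<Rightarrow> ('v \<times> 'v) set \<Rightarrow> ('v list \<Rightarrow> 'a::field) set"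
  for V lev E where
  zero: "(\<lambda>_. 0) \<in> RB V lev E"
| gen: "g \<in> RB_gens V lev E \<Longrightarrow> g \<in> RB V lev E"
| add: "x \<in> RB V lev E \<Longrightarrow> y \<in> RB V lev E \<Longrightarrow> (\<lambda>u. x u + y u) \<in> RB V lev E"
| scale: "x \<in> RB V lev E \<Longrightarrow> (\<lambda>u. c * x u) \<in> RB V lev E"
| lmult: "x \<in> RB V lev E \<Longrightarrow> v \<in> V \<Longrightarrow> 1 \<le> lev v \<Longrightarrow> tmult (mon [v]) x \<in> RB V lev E"
| rmult: "x \<in> RB V lev E \<Longrightarrow> v \<in> V \<Longrightarrow> 1 \<le> lev v \<Longrightarrow> tmult x (mon [v]) \<in> RB V lev E"

text \<open>An element of B_n = span V_n is given by a coefficient function c :: 'v => 'a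
  supported on V_n; emb c is the corresponding element of T(V_+).\<close>
definition emb :: "('v \<Rightarrow> 'a::field) \<Rightarrow> ('v list \<Rightarrow> 'a)" where
  "emb c = (\<lambda>u. case u of [v] \<Rightarrow> c v | _ \<Rightarrow> 0)"

definition supported_on :: "('v \<Rightarrow> 'a::field) \<Rightarrow> 'v set \<Rightarrow> bool" where
  "supported_on c S \<longleftrightarrow> (\<forall>v. c v \<noteq> 0 \<longrightarrow> v \<in> S)"

definition delta :: "'v \<Rightarrow> ('v \<Rightarrow> 'a::field)" where
  "delta a = (\<lambda>v. if v = a then 1 else 0)"

text \<open>kappa_a = ker(B_{n-1} -> B(Gamma), b |-> a b), as a subspace of coefficient functions.\<close>
definition kappa :: "'v set \<Rightarrow> ('v \<Rightarrow> nat) \<Rightarrow> ('v \<times> 'v) set \<Rightarrow> nat \<Rightarrow> ('v \<Rightarrow> 'a::field) \<Rightarrow> ('v \<Rightarrow> 'a) set" where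
  "kappa V lev E n a = {c. supported_on c (layer V lev (n - 1)) \<and> tmult (emb a) (emb c) \<in> RB V lev E}"

abbreviation fdim :: "('v \<Rightarrow> 'a::field) set \<Rightarrow> nat" where
  "fdim S \<equiv> vector_space.dim (\<lambda>(c::'a) f x. c * f x) S"

definition in_lin_span :: "('v \<Rightarrow> 'a::field) \<Rightarrow> (nat \<Rightarrow> 'v \<Rightarrow> 'a) \<Rightarrow> nat \<Rightarrow> bool" where
  "in_lin_span c b i \<longleftrightarrow> (\<exists>\<alpha>. \<forall>v. c v = (\<Sum>j<i. \<alpha> j * b j v))"

definition is_basis_Bn :: "'v set \<Rightarrow> ('v \<Rightarrow> nat) \<Rightarrow> nat \<Rightarrow> (nat \<Rightarrow> 'v \<Rightarrow> 'a::field) \<Rightarrow> bool" where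
  "is_basis_Bn V lev n b \<longleftrightarrow>
     (\<forall>i < card (layer V lev n). supported_on (b i) (layer V lev n)) \<and>
     (\<forall>\<alpha>. (\<forall>v. (\<Sum>i<card (layer V lev n). \<alpha> i * b i v) = 0) \<longrightarrow> (\<forall>i < card (layer V lev n). \<alpha> i = 0)) \<and>
     (\<forall>c. supported_on c (layer V lev n) \<longrightarrow> in_lin_span c b (card (layer V lev n)))"

fun wprod :: "('v \<Rightarrow> ('v list \<Rightarrow> 'a::field)) \<Rightarrow> 'v list \<Rightarrow> ('v list \<Rightarrow> 'a)" where
  "wprod f [] = mon []"
| "wprod f (x # xs) = tmult (f x) (wprod f xs)"

text \<open>The unique unital algebra homomorphism of the free algebra sending each letter x to f x.\<close>
definition subst :: "('v \<Rightarrow> ('v list \<Rightarrow> 'a::field)) \<Rightarrow> ('v list \<Rightarrow> 'a) \<Rightarrow> ('v list \<Rightarrow> 'a)" where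
  "subst f p = (\<lambda>u. \<Sum>w\<in>tsupp p. p w * wprod f w u)"

text \<open>L = {b 0, ..., b (k-1)} is upper vertex-like: there is a doubly graded algebra
 automorphism of B(Gamma|_n) (the image of TA V lev n in B(Gamma)) fixing every vertex of
 levels 1..n-1 and mapping V_n onto L.  Any such automorphism lifts to an endomorphism
 subst f of the free algebra on V_1..V_n (free algebra is free); graded means that the
 generator images are homogeneous of the right bidegree; well-definedness, injectivity
 and surjectivity are taken modulo R_B.\<close>
definition upper_vertex_like :: "'v set \<Rightarrow> ('v \<Rightarrow> nat) \<Rightarrow> ('v \<times> 'v) set \<Rightarrow> nat \<Rightarrow> (nat \<Rightarrow> 'v \<Rightarrow> 'a::field) \<Rightarrow> bool" where
  "upper_vertex_like V lev E n b \<longleftrightarrow>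
    (\<exists>f :: 'v \<Rightarrow> ('v list \<Rightarrow> 'a).
       (\<forall>v \<in> V. 1 \<le> lev v \<and> lev v < n \<longrightarrow> f v = mon [v]) \<and>
       (\<forall>v \<in> layer V lev n. \<exists>c. supported_on c (layer V lev n) \<and> f v = emb c) \<and>
       (\<forall>x \<in> TA V lev n. x \<in> RB V lev E \<longrightarrow> subst f x \<in> RB V lev E) \<and>
       (\<forall>x \<in> TA V lev n. subst f x \<in> RB V lev E \<longrightarrow> x \<in> RB V lev E) \<and>
       (\<forall>y \<in> TA V lev n. \<exists>x \<in> TA V lev n. (\<lambda>u. subst f x u - y u) \<in> RB V lev E) \<and>
       f ` layer V lev n = emb ` b ` {..<card (layer V lev n)})"

end

theory Submission
  imports Defs
begin


lemma sum_fun_apply: "(\<Sum>i\<in>I. (f i :: 'b \<Rightarrow> 'c::comm_monoid_add)) x = (\<Sum>i\<in>I. f i x)"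
  by (induction I rule: infinite_finite_induct) auto

lemma mon_apply: "mon w u = (if u = w then 1 else 0)"
  by (simp add: mon_def)

lemma tmult_mon_mon: "tmult (mon a) (mon b) = (mon (a @ b) :: 'v list \<Rightarrow> 'a::field)"
proof (rule ext)
  fix w :: "'v list"
  have eq: "\<And>i. i \<in> {0..length w} \<Longrightarrow>
     (mon a (take i w) * mon b (drop i w) :: 'a) = (if i = length a then (if w = a @ b then 1 else 0) else 0)"
  proof -
    fix i assume i: "i \<in> {0..length w}"
    have "(take i w = a \<and> drop i w = b) \<longleftrightarrow> (i = length a \<and> w = a @ b)"
    proof
      assume h: "take i w = a \<and> drop i w = b"
      then have "w = a @ b" by (metis append_take_drop_id)
      moreover have "length (take i w) = i" using i by simp
      then have "i = length a" using h by simp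
      ultimately show "i = length a \<and> w = a @ b" by simp
    qed auto
    moreover have "(mon a (take i w) * mon b (drop i w) :: 'a) = (if take i w = a \<and> drop i w = b then 1 else 0)"
      by (simp add: mon_def)
    ultimately show "(mon a (take i w) * mon b (drop i w) :: 'a) = (if i = length a then (if w = a @ b then 1 else 0) else 0)"
      by simp
  qed
  have "tmult (mon a) (mon b) w = (\<Sum>i\<in>{0..length w}. (if i = length a then (if w = a @ b then 1 else 0) else 0 :: 'a))"
    unfolding tmult_def using eq by (intro sum.cong) auto
  also have "\<dots> = mon (a @ b) w"
    by (auto simp: mon_def)
  finally show "tmult (mon a) (mon b) w = (mon (a @ b) w :: 'a)" .
qed

lemma tmult_sum_left:
  "tmult (\<lambda>u. \<Sum>i\<in>I. F i u) y = (\<lambda>u. \<Sum>i\<in>I. tmult (F i) y u)"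
  unfolding tmult_def by (rule ext) (simp add: sum_distrib_right sum.swap[of _ I])

lemma tmult_sum_right:
  "tmult x (\<lambda>u. \<Sum>i\<in>I. F i u) = (\<lambda>u. \<Sum>i\<in>I. tmult x (F i) u)"
  unfolding tmult_def by (rule ext) (simp add: sum_distrib_left sum.swap[of _ I])

lemma tmult_scale_left:
  "tmult (\<lambda>u. c * x u) y = (\<lambda>u. c * tmult x y u)"
  unfolding tmult_def by (rule ext) (simp add: sum_distrib_left mult.assoc)

lemma tmult_scale_right:
  "tmult x (\<lambda>u. c * y u) = (\<lambda>u. c * tmult x y u)"
  unfolding tmult_def by (rule ext) (simp add: sum_distrib_left mult_ac)

lemma tmult_add_left:
  "tmult (\<lambda>u. x u + z u) y = (\<lambda>u. tmult x y u + tmult z y u)"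
  unfolding tmult_def by (rule ext) (simp add: distrib_right sum.distrib)

lemma tmult_add_right:
  "tmult x (\<lambda>u. y u + z u) = (\<lambda>u. tmult x y u + tmult x z u)"
  unfolding tmult_def by (rule ext) (simp add: distrib_left sum.distrib)

lemma tmult_zero_left: "tmult (\<lambda>_. 0) y = (\<lambda>_. 0)"
  unfolding tmult_def by simp

lemma tmult_zero_right: "tmult x (\<lambda>_. 0) = (\<lambda>_. 0)"
  unfolding tmult_def by simp

lemma tmult_assoc: "tmult p (tmult q r) = tmult (tmult p q) (r :: 'v list \<Rightarrow> 'a::field)"
proof (rule ext)
  fix w :: "'v list"
  define n where "n = length w"
  define A where "A i k = p (take i w) * q (drop i (take k w)) * r (drop k w)" for i k
  have L: "tmult p (tmult q r) w = (\<Sum>i\<in>{0..n}. \<Sum>k\<in>{i..n}. A i k)"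
  proof -
    have "tmult p (tmult q r) w = (\<Sum>i\<in>{0..n}. \<Sum>j\<in>{0..n-i}. A i (j+i))"
      unfolding tmult_def n_def A_def
      by (intro sum.cong refl) (simp add: sum_distrib_left mult.assoc drop_take add.commute)
    also have "\<dots> = (\<Sum>i\<in>{0..n}. \<Sum>k\<in>{i..n}. A i k)"
    proof (rule sum.cong[OF refl])
      fix i assume "i \<in> {0..n}"
      then have "{0+i..(n-i)+i} = {i..n}" by auto
      then show "(\<Sum>j\<in>{0..n-i}. A i (j+i)) = (\<Sum>k\<in>{i..n}. A i k)"
        using sum.shift_bounds_cl_nat_ivl[of "A i" 0 i "n-i"] by simp
    qed
    finally show ?thesis .
  qed
  have R: "tmult (tmult p q) r w = (\<Sum>k\<in>{0..n}. \<Sum>i\<in>{0..k}. A i k)"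
    unfolding tmult_def n_def A_def
    by (intro sum.cong refl) (simp add: sum_distrib_right min_def)
  have "(\<Sum>i\<in>{0..n}. \<Sum>k\<in>{i..n}. A i k) = (\<Sum>i\<in>{0..n}. \<Sum>k\<in>{k\<in>{0..n}. i \<le> k}. A i k)"
    by (intro sum.cong refl) auto
  also have "\<dots> = (\<Sum>k\<in>{0..n}. \<Sum>i\<in>{i\<in>{0..n}. i \<le> k}. A i k)"
    by (rule sum.swap_restrict) auto
  also have "\<dots> = (\<Sum>k\<in>{0..n}. \<Sum>i\<in>{0..k}. A i k)"
    by (intro sum.cong refl) auto
  finally show "tmult p (tmult q r) w = tmult (tmult p q) r w" using L R by simp
qed

lemma tmult_nonzero:
  assumes "tmult p q w \<noteq> 0"
  shows "\<exists>a b. w = a @ b \<and> p a \<noteq> 0 \<and> q b \<noteq> 0"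
proof -
  from assms obtain i where "p (take i w) * q (drop i w) \<noteq> 0"
    unfolding tmult_def by (auto elim: sum.not_neutral_contains_not_neutral)
  then show ?thesis by (intro exI[of _ "take i w"] exI[of _ "drop i w"]) auto
qed

lemma tsupp_tmult: "tsupp (tmult p q) \<subseteq> (\<lambda>(a, b). a @ b) ` (tsupp p \<times> tsupp q)"
proof
  fix w assume "w \<in> tsupp (tmult p q)"
  then obtain a b where "w = a @ b" "p a \<noteq> 0" "q b \<noteq> 0"
    using tmult_nonzero unfolding tsupp_def by blast
  then show "w \<in> (\<lambda>(a, b). a @ b) ` (tsupp p \<times> tsupp q)"
    unfolding tsupp_def by (auto intro!: image_eqI[of _ _ "(a, b)"])
qed

lemma fin_tmult: "finite (tsupp p) \<Longrightarrow> finite (tsupp q) \<Longrightarrow> finite (tsupp (tmult p q))"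
  by (rule finite_subset[OF tsupp_tmult], intro finite_imageI finite_cartesian_product)

lemma TA_tmult:
  assumes "p \<in> TA V lev n" "q \<in> TA V lev n"
  shows "tmult p q \<in> TA V lev n"
proof -
  have "finite (tsupp p)" "finite (tsupp q)" using assms unfolding TA_def by auto
  then have "finite (tsupp (tmult p q))" by (rule fin_tmult)
  moreover have "\<forall>w \<in> tsupp (tmult p q). \<forall>x \<in> set w. x \<in> V \<and> 1 \<le> lev x \<and> lev x \<le> n"
  proof (intro ballI)
    fix w x assume w: "w \<in> tsupp (tmult p q)" and x: "x \<in> set w"
    from w have "w \<in> (\<lambda>(a, b). a @ b) ` (tsupp p \<times> tsupp q)"
      using tsupp_tmult by (rule subsetD[rotated])
    then obtain a b where "w = a @ b" "a \<in> tsupp p" "b \<in> tsupp q"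
      by auto
    then have "x \<in> set a \<or> x \<in> set b" using x by simp
    then show "x \<in> V \<and> 1 \<le> lev x \<and> lev x \<le> n"
    proof
      assume "x \<in> set a" then show ?thesis using assms(1) \<open>a \<in> tsupp p\<close> unfolding TA_def by blast
    next
      assume "x \<in> set b" then show ?thesis using assms(2) \<open>b \<in> tsupp q\<close> unfolding TA_def by blast
    qed
  qed
  ultimately show ?thesis unfolding TA_def by simp
qed

lemma tsupp_lin: "tsupp (\<lambda>u. \<Sum>i\<in>I. c i * x i u) \<subseteq> (\<Union>i\<in>I. tsupp (x i))"
proof
  fix w assume "w \<in> tsupp (\<lambda>u. \<Sum>i\<in>I. c i * x i u)"
  then obtain i where "i \<in> I" "c i * x i w \<noteq> 0"
    unfolding tsupp_def by (auto elim: sum.not_neutral_contains_not_neutral)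
  then show "w \<in> (\<Union>i\<in>I. tsupp (x i))" unfolding tsupp_def by auto
qed

lemma fin_lin: "finite I \<Longrightarrow> (\<And>i. i \<in> I \<Longrightarrow> finite (tsupp (x i))) \<Longrightarrow>
   finite (tsupp (\<lambda>u. \<Sum>i\<in>I. c i * x i u))"
  by (rule finite_subset[OF tsupp_lin]) auto

lemma TA_lin:
  assumes "finite I" "\<And>i. i \<in> I \<Longrightarrow> x i \<in> TA V lev n"
  shows "(\<lambda>u. \<Sum>i\<in>I. c i * x i u) \<in> TA V lev n"
  using assms fin_lin[of I x c] tsupp_lin[of c x I] unfolding TA_def by blast

lemma tsupp_mon: "tsupp (mon w :: 'v list \<Rightarrow> 'a::field) = {w}"
  by (auto simp: tsupp_def mon_def)

lemma TA_mon: "(\<forall>x\<in>set w. x \<in> V \<and> 1 \<le> lev x \<and> lev x \<le> n) \<Longrightarrow> (mon w :: 'v list \<Rightarrow> 'a::field) \<in> TA V lev n"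
  by (simp add: TA_def tsupp_mon)

lemma TA_wprod: "(\<And>x. x \<in> set w \<Longrightarrow> g x \<in> TA V lev n) \<Longrightarrow> wprod g w \<in> TA V lev n"
  by (induction w) (auto intro: TA_tmult TA_mon)

lemma fin_wprod: "(\<And>x. x \<in> set w \<Longrightarrow> finite (tsupp (g x))) \<Longrightarrow> finite (tsupp (wprod g w))"
  by (induction w) (auto intro: fin_tmult simp: tsupp_mon)

lemma expand: "finite S \<Longrightarrow> tsupp p \<subseteq> S \<Longrightarrow> (\<lambda>u. \<Sum>w\<in>S. p w * mon w u) = p"
proof (rule ext)
  fix u assume S: "finite S" "tsupp p \<subseteq> S"
  have "(\<Sum>w\<in>S. p w * mon w u) = (\<Sum>w\<in>S. if w = u then p u else 0)"
    by (intro sum.cong) (auto simp: mon_def)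
  also have "\<dots> = p u" using S by (auto simp: tsupp_def)
  finally show "(\<Sum>w\<in>S. p w * mon w u) = p u" .
qed

lemma subst_superset:
  assumes "finite S" "tsupp p \<subseteq> S"
  shows "subst g p = (\<lambda>u. \<Sum>w\<in>S. p w * wprod g w u)"
  unfolding subst_def
  by (rule ext, rule sum.mono_neutral_left) (use assms in \<open>auto simp: tsupp_def\<close>)

lemma subst_lin:
  assumes I: "finite I" and fin: "\<And>i. i \<in> I \<Longrightarrow> finite (tsupp (x i))"
  shows "subst g (\<lambda>u. \<Sum>i\<in>I. c i * x i u) = (\<lambda>u. \<Sum>i\<in>I. c i * subst g (x i) u)"
proof -
  define S where "S = (\<Union>i\<in>I. tsupp (x i))"
  have S: "finite S" using I fin by (auto simp: S_def)
  have "subst g (\<lambda>u. \<Sum>i\<in>I. c i * x i u) = (\<lambda>u. \<Sum>w\<in>S. (\<Sum>i\<in>I. c i * x i w) * wprod g w u)"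
    by (rule subst_superset[OF S]) (use tsupp_lin S_def in blast)
  also have "\<dots> = (\<lambda>u. \<Sum>i\<in>I. c i * (\<Sum>w\<in>S. x i w * wprod g w u))"
    by (rule ext) (simp add: sum_distrib_right sum_distrib_left sum.swap[of _ S] mult.assoc)
  also have "\<dots> = (\<lambda>u. \<Sum>i\<in>I. c i * subst g (x i) u)"
  proof (rule ext, rule sum.cong[OF refl])
    fix u i assume "i \<in> I"
    then have "tsupp (x i) \<subseteq> S" by (auto simp: S_def)
    then show "c i * (\<Sum>w\<in>S. x i w * wprod g w u) = c i * subst g (x i) u"
      by (simp add: subst_superset[OF S])
  qed
  finally show ?thesis .
qed

lemma subst_mon: "subst g (mon w) = wprod g w"
  unfolding subst_def tsupp_mon by (simp add: mon_def)

lemma tmult_Nil_left: "tmult (mon []) x = x"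
proof (rule ext)
  fix w
  have "tmult (mon []) x w = (\<Sum>i\<in>{0..length w}. if i = 0 then x w else 0)"
    unfolding tmult_def by (intro sum.cong) (auto simp: mon_def)
  then show "tmult (mon []) x w = x w" by simp
qed

lemma wprod_append: "wprod g (a @ b) = tmult (wprod g a) (wprod g b)"
  by (induction a) (simp_all add: tmult_Nil_left tmult_assoc)

lemma tmult_expand:
  assumes "finite (tsupp p)" "finite (tsupp q)"
  shows "tmult p q = (\<lambda>u. \<Sum>a\<in>tsupp p. \<Sum>b\<in>tsupp q. (p a * q b) * mon (a @ b) u)"
proof -
  have ep: "(\<lambda>u. \<Sum>a\<in>tsupp p. p a * mon a u) = p" by (rule expand) (use assms in auto)
  have eq: "(\<lambda>u. \<Sum>b\<in>tsupp q. q b * mon b u) = q" by (rule expand) (use assms in auto)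
  have "tmult p q = tmult (\<lambda>u. \<Sum>a\<in>tsupp p. p a * mon a u) (\<lambda>u. \<Sum>b\<in>tsupp q. q b * mon b u)"
    by (simp only: ep eq)
  also have "\<dots> = (\<lambda>u. \<Sum>a\<in>tsupp p. \<Sum>b\<in>tsupp q. (p a * q b) * mon (a @ b) u)"
    by (simp only: tmult_sum_left tmult_scale_left tmult_sum_right tmult_scale_right tmult_mon_mon)
       (simp add: sum_distrib_left mult.assoc)
  finally show ?thesis .
qed


lemma subst_hom:
  assumes p: "finite (tsupp p)" and q: "finite (tsupp q)"
  shows "subst g (tmult p q) = tmult (subst g p) (subst g q)"
proof -
  have "tmult p q = (\<lambda>u. \<Sum>ab\<in>tsupp p \<times> tsupp q. (p (fst ab) * q (snd ab)) * mon (fst ab @ snd ab) u)"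
    unfolding tmult_expand[OF p q] sum.cartesian_product by (simp add: case_prod_beta')
  then have "subst g (tmult p q) = (\<lambda>u. \<Sum>ab\<in>tsupp p \<times> tsupp q. (p (fst ab) * q (snd ab)) * subst g (mon (fst ab @ snd ab)) u)"
    using p q by (simp add: subst_lin tsupp_mon)
  also have "\<dots> = (\<lambda>u. \<Sum>a\<in>tsupp p. \<Sum>b\<in>tsupp q. (p a * q b) * tmult (wprod g a) (wprod g b) u)"
    unfolding sum.cartesian_product by (simp add: subst_mon wprod_append case_prod_beta')
  also have "\<dots> = tmult (\<lambda>u. \<Sum>a\<in>tsupp p. p a * wprod g a u) (\<lambda>u. \<Sum>b\<in>tsupp q. q b * wprod g b u)"
    by (simp only: tmult_sum_left tmult_scale_left tmult_sum_right tmult_scale_right)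
       (simp add: sum_distrib_left mult.assoc)
  also have "\<dots> = tmult (subst g p) (subst g q)"
    by (simp add: subst_def)
  finally show ?thesis .
qed

lemma subst_expl: "subst g y = (\<lambda>u. \<Sum>w\<in>tsupp y. y w * wprod g w u)"
  by (simp add: subst_def)

lemma TA_subst:
  assumes "y \<in> TA V lev n" "\<And>x. x \<in> V \<Longrightarrow> 1 \<le> lev x \<Longrightarrow> lev x \<le> n \<Longrightarrow> g x \<in> TA V lev n"
  shows "subst g y \<in> TA V lev n"
proof -
  have "finite (tsupp y)" using assms(1) by (simp add: TA_def)
  moreover have "\<And>w. w \<in> tsupp y \<Longrightarrow> wprod g w \<in> TA V lev n"
  proof -
    fix w assume w: "w \<in> tsupp y"
    show "wprod g w \<in> TA V lev n"
    proof (rule TA_wprod)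
      fix x assume "x \<in> set w"
      then have "x \<in> V \<and> 1 \<le> lev x \<and> lev x \<le> n" using assms(1) w unfolding TA_def by blast
      then show "g x \<in> TA V lev n" using assms(2) by blast
    qed
  qed
  ultimately show ?thesis unfolding subst_expl by (rule TA_lin)
qed

lemma fin_subst:
  assumes "finite (tsupp y)" "\<And>x. finite (tsupp (g x))"
  shows "finite (tsupp (subst g y))"
  unfolding subst_expl using assms by (intro fin_lin fin_wprod) auto

lemma wprod_mon: "(\<And>a. a \<in> set w \<Longrightarrow> h a = mon [a]) \<Longrightarrow> wprod h w = mon w"
  by (induction w) (simp_all add: tmult_mon_mon)

lemma subst_id:
  assumes "finite (tsupp x)" "\<And>w a. w \<in> tsupp x \<Longrightarrow> a \<in> set w \<Longrightarrow> h a = mon [a]"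
  shows "subst h x = x"
proof -
  have "subst h x = (\<lambda>u. \<Sum>w\<in>tsupp x. x w * mon w u)"
    unfolding subst_expl by (rule ext, rule sum.cong[OF refl]) (simp add: wprod_mon assms(2))
  also have "\<dots> = x" using assms(1) by (rule expand) simp
  finally show ?thesis .
qed

lemma wprod_subst:
  assumes "\<And>a. finite (tsupp (f a))"
  shows "subst g (wprod f w) = wprod (\<lambda>a. subst g (f a)) w"
proof (induction w)
  case Nil then show ?case by (simp add: subst_mon)
next
  case (Cons a w)
  have "subst g (wprod f (a # w)) = tmult (subst g (f a)) (subst g (wprod f w))"
    using assms by (simp add: subst_hom fin_wprod)
  then show ?case using Cons by simp
qed

lemma subst_comp:
  assumes "finite (tsupp x)" "\<And>a. finite (tsupp (f a))"
  shows "subst g (subst f x) = subst (\<lambda>a. subst g (f a)) x"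
proof -
  have "subst g (subst f x) = (\<lambda>u. \<Sum>w\<in>tsupp x. x w * subst g (wprod f w) u)"
    unfolding subst_expl[of f x] using assms by (subst subst_lin) (auto intro: fin_wprod)
  also have "\<dots> = subst (\<lambda>a. subst g (f a)) x"
    by (simp only: wprod_subst[OF assms(2)] subst_expl[of "(\<lambda>a. subst g (f a))" x])
  finally show ?thesis .
qed


lemma fin_sum1:
  assumes "\<And>i. i \<in> I \<Longrightarrow> finite (tsupp (x i))"
  shows "finite (tsupp (\<lambda>u. \<Sum>i\<in>I. x i u))"
proof (cases "finite I")
  case True
  have "tsupp (\<lambda>u. \<Sum>i\<in>I. x i u) \<subseteq> (\<Union>i\<in>I. tsupp (x i))"
    using tsupp_lin[of "\<lambda>_. 1" x I] by simp
  then show ?thesis by (rule finite_subset) (use True assms in auto)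
next
  case False then show ?thesis by (simp add: tsupp_def)
qed

lemma RB_fin: "x \<in> RB V lev E \<Longrightarrow> finite (tsupp x)"
proof (induction rule: RB.induct)
  case zero then show ?case by (simp add: tsupp_def)
next
  case (gen g)
  then show ?case unfolding RB_gens_def
    by (auto simp: tsupp_mon intro!: fin_sum1)
next
  case (add x y)
  have "tsupp (\<lambda>u. x u + y u) \<subseteq> tsupp x \<union> tsupp y" by (auto simp: tsupp_def)
  then show ?case by (rule finite_subset) (use add in auto)
next
  case (scale x c)
  have "tsupp (\<lambda>u. c * x u) \<subseteq> tsupp x" by (auto simp: tsupp_def)
  then show ?case by (rule finite_subset) (use scale in auto)
next
  case (lmult x v) then show ?case by (simp add: fin_tmult tsupp_mon)
next
  case (rmult x v) then show ?case by (simp add: fin_tmult tsupp_mon)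
qed

lemma RB_sum:
  assumes "finite I" "\<And>i. i \<in> I \<Longrightarrow> x i \<in> RB V lev E"
  shows "(\<lambda>u. \<Sum>i\<in>I. c i * x i u) \<in> RB V lev E"
  using assms
proof (induction I rule: finite_induct)
  case empty then show ?case using RB.zero by simp
next
  case (insert i I)
  have "(\<lambda>u. c i * x i u) \<in> RB V lev E" using insert by (intro RB.scale) auto
  moreover have "(\<lambda>u. \<Sum>i\<in>I. c i * x i u) \<in> RB V lev E" using insert by auto
  ultimately have "(\<lambda>u. c i * x i u + (\<Sum>i\<in>I. c i * x i u)) \<in> RB V lev E"
    by (rule RB.add)
  then show ?case using insert by simp
qed

lemma RB_lmult_lin:
  assumes "x \<in> RB V lev E" "finite S" "\<And>v. v \<in> S \<Longrightarrow> v \<in> V \<and> 1 \<le> lev v"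
  shows "tmult (\<lambda>u. \<Sum>v\<in>S. c v * mon [v] u) x \<in> RB V lev E"
proof -
  have "tmult (\<lambda>u. \<Sum>v\<in>S. c v * mon [v] u) x = (\<lambda>u. \<Sum>v\<in>S. c v * tmult (mon [v]) x u)"
    by (simp only: tmult_sum_left tmult_scale_left)
  also have "\<dots> \<in> RB V lev E"
    using assms by (intro RB_sum RB.lmult) auto
  finally show ?thesis .
qed

lemma RB_rmult_lin:
  assumes "x \<in> RB V lev E" "finite S" "\<And>v. v \<in> S \<Longrightarrow> v \<in> V \<and> 1 \<le> lev v"
  shows "tmult x (\<lambda>u. \<Sum>v\<in>S. c v * mon [v] u) \<in> RB V lev E"
proof -
  have "tmult x (\<lambda>u. \<Sum>v\<in>S. c v * mon [v] u) = (\<lambda>u. \<Sum>v\<in>S. c v * tmult x (mon [v]) u)"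
    by (simp only: tmult_sum_right tmult_scale_right)
  also have "\<dots> \<in> RB V lev E"
    using assms by (intro RB_sum RB.rmult) auto
  finally show ?thesis .
qed

definition Inv :: "('v \<times> 'v) set \<Rightarrow> ('v list \<Rightarrow> 'a::field) \<Rightarrow> bool" where
  "Inv E x \<longleftrightarrow> x [] = 0 \<and> (\<forall>a. x [a] = 0) \<and>
     (\<exists>k. \<forall>v w. (v, w) \<in> E \<longrightarrow> x [v, w] = k v)"

lemma tmult_len0: "tmult x y [] = x [] * y []"
  by (simp add: tmult_def)

lemma tmult_len1: "tmult x y [a] = x [] * y [a] + x [a] * y []"
  by (simp add: tmult_def atLeast0AtMost atMost_Suc)

lemma tmult_len2: "tmult x y [a, b] = x [] * y [a, b] + x [a] * y [b] + x [a, b] * y []"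
  by (simp add: tmult_def atLeast0AtMost atMost_Suc)

lemma sumgen_apply:
  "(\<Sum>w\<in>succs E v'. mon [v', w] [v, w'']) = (if v = v' \<and> w'' \<in> succs E v' \<and> finite (succs E v') then 1 else (0::'a::field))"
proof (cases "finite (succs E v')")
  case True
  have "(\<Sum>w\<in>succs E v'. mon [v', w] [v, w'']) = (\<Sum>w\<in>succs E v'. if w = w'' then (if v = v' then 1 else 0) else (0::'a))"
    by (intro sum.cong) (auto simp: mon_def)
  also have "\<dots> = (if v = v' \<and> w'' \<in> succs E v' then 1 else 0)"
    using True by simp
  finally show ?thesis using True by simp
qed simp

lemma Inv_add: "Inv E x \<Longrightarrow> Inv E y \<Longrightarrow> Inv E (\<lambda>u. x u + y u)"
  unfolding Inv_def
proof (elim conjE exE, intro conjI exI allI impI)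
  fix k1 k2 v w
  assume "\<forall>v w. (v, w) \<in> E \<longrightarrow> x [v, w] = k1 v" "\<forall>v w. (v, w) \<in> E \<longrightarrow> y [v, w] = k2 v" "(v, w) \<in> E"
  then show "x [v, w] + y [v, w] = k1 v + k2 v" by simp
qed simp_all

lemma Inv_scale: "Inv E x \<Longrightarrow> Inv E (\<lambda>u. c * x u)"
  unfolding Inv_def
proof (elim conjE exE, intro conjI exI allI impI)
  fix k1 v w
  assume "\<forall>v w. (v, w) \<in> E \<longrightarrow> x [v, w] = k1 v" "(v, w) \<in> E"
  then show "c * x [v, w] = c * k1 v" by simp
qed simp_all

lemma Inv_lmult: "Inv E x \<Longrightarrow> Inv E (tmult (mon [a]) x)"
  unfolding Inv_def by (intro conjI allI exI[of _ "\<lambda>_. 0"]) (simp_all add: tmult_len0 tmult_len1 tmult_len2 mon_def)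

lemma Inv_rmult: "Inv E x \<Longrightarrow> Inv E (tmult x (mon [a]))"
  unfolding Inv_def by (intro conjI allI exI[of _ "\<lambda>_. 0"]) (simp_all add: tmult_len0 tmult_len1 tmult_len2 mon_def)

lemma Inv_gen: "g \<in> RB_gens V lev E \<Longrightarrow> Inv E (g :: 'v list \<Rightarrow> 'a::field)"
proof -
  assume "g \<in> RB_gens V lev E"
  then consider (m) v w where "g = mon [v, w]" "(v, w) \<notin> E"
    | (s) v where "g = (\<lambda>u. \<Sum>w\<in>succs E v. mon [v, w] u)"
    unfolding RB_gens_def by auto
  then show ?thesis
  proof cases
    case m
    have "mon [v, w] [v1, w1] = (0 :: 'a)" if "(v1, w1) \<in> E" for v1 w1
      using m that by (auto simp: mon_def)
    then show ?thesis unfolding Inv_def m(1) by (intro conjI allI exI[of _ "\<lambda>_. 0"]) (simp_all add: mon_def)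
  next
    case s
    have "(\<Sum>wa\<in>succs E v. mon [v, wa] [v1, w1]) = (if v1 = v \<and> finite (succs E v) then 1 else 0 :: 'a)"
      if "(v1, w1) \<in> E" for v1 w1
      unfolding sumgen_apply using that by (auto simp add: succs_def)
    then show ?thesis unfolding Inv_def s(1)
      by (intro conjI allI exI[of _ "\<lambda>v1. if v1 = v \<and> finite (succs E v) then 1 else 0"]) (simp_all add: mon_def)
  qed
qed

lemma RB_Inv:
  fixes x :: "'v list \<Rightarrow> 'a::field"
  shows "x \<in> RB V lev E \<Longrightarrow> Inv E x"
proof (induction rule: RB.induct)
  case zero show ?case unfolding Inv_def by (intro conjI allI exI[of _ "\<lambda>_. 0"]) simp_all
qed (blast intro: Inv_add Inv_scale Inv_lmult Inv_rmult Inv_gen)+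

lemma emb_prod2: "tmult (emb a) (emb c) [v, w] = a v * c w"
  by (simp add: tmult_len2 emb_def)

lemma emb_expand:
  fixes a :: "'v \<Rightarrow> 'a::field"
  assumes "supported_on a S" "finite S"
  shows "emb a = (\<lambda>u. \<Sum>v\<in>S. a v * mon [v] u)"
proof (rule ext)
  fix u
  show "emb a u = (\<Sum>v\<in>S. a v * mon [v] u)"
  proof (cases "\<exists>x. u = [x]")
    case True
    then obtain x where u: "u = [x]" by blast
    have "(\<Sum>v\<in>S. a v * mon [v] u) = (\<Sum>v\<in>S. if v = x then a x else 0)"
      by (intro sum.cong) (auto simp: mon_def u)
    also have "\<dots> = a x" using assms by (auto simp: supported_on_def)
    finally show ?thesis by (simp add: emb_def u)
  next
    case False
    then have "\<And>v. mon [v] u = (0::'a)" by (auto simp: mon_def)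
    moreover have "emb a u = 0" using False by (auto simp: emb_def split: list.split)
    ultimately show ?thesis by simp
  qed
qed

lemma fin_emb: "supported_on a S \<Longrightarrow> finite S \<Longrightarrow> finite (tsupp (emb a))"
  by (simp add: emb_expand fin_lin tsupp_mon)


lemma tmult_Nil_right: "tmult x (mon []) = x"
proof (rule ext)
  fix w
  have "tmult x (mon []) w = (\<Sum>i\<in>{0..length w}. if i = length w then x w else 0)"
    unfolding tmult_def by (intro sum.cong) (auto simp: mon_def)
  then show "tmult x (mon []) w = x w" by simp
qed

lemma subst_letter: "subst g (mon [a]) = g a"
  by (simp add: subst_mon tmult_Nil_right)

lemma subst_zero: "subst g (\<lambda>_. 0) = (\<lambda>_. 0)"
  by (simp add: subst_def tsupp_def)

lemma subst_add:
  assumes "finite (tsupp x)" "finite (tsupp y)"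
  shows "subst g (\<lambda>u. x u + y u) = (\<lambda>u. subst g x u + subst g y u)"
proof -
  let ?S = "tsupp x \<union> tsupp y"
  have S: "finite ?S" using assms by simp
  have "subst g (\<lambda>u. x u + y u) = (\<lambda>u. \<Sum>w\<in>?S. (x w + y w) * wprod g w u)"
    by (rule subst_superset[OF S]) (auto simp: tsupp_def)
  also have "\<dots> = (\<lambda>u. (\<Sum>w\<in>?S. x w * wprod g w u) + (\<Sum>w\<in>?S. y w * wprod g w u))"
    by (simp add: distrib_right sum.distrib)
  also have "\<dots> = (\<lambda>u. subst g x u + subst g y u)"
    by (simp add: subst_superset[OF S, of x] subst_superset[OF S, of y])
  finally show ?thesis .
qed

lemma subst_scale:
  assumes "finite (tsupp x)"
  shows "subst g (\<lambda>u. c * x u) = (\<lambda>u. c * subst g x u)"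
proof -
  have S: "finite (tsupp x)" by (rule assms)
  have "subst g (\<lambda>u. c * x u) = (\<lambda>u. \<Sum>w\<in>tsupp x. (c * x w) * wprod g w u)"
    by (rule subst_superset[OF S]) (auto simp: tsupp_def)
  also have "\<dots> = (\<lambda>u. c * subst g x u)"
    by (simp add: subst_superset[OF S, of x] sum_distrib_left mult.assoc)
  finally show ?thesis .
qed

lemma RB_nonedge:
  assumes "finite (tsupp x)"
    and "\<And>w. w \<in> tsupp x \<Longrightarrow> \<exists>y z. w = [y, z] \<and> y \<in> V \<and> z \<in> V \<and> 1 \<le> lev y \<and> 1 \<le> lev z \<and> (y, z) \<notin> E"
  shows "x \<in> RB V lev E"
proof -
  have "(\<lambda>u. \<Sum>w\<in>tsupp x. x w * mon w u) \<in> RB V lev E"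
  proof (rule RB_sum[OF assms(1)])
    fix w assume "w \<in> tsupp x"
    then obtain y z where "w = [y, z]" "y \<in> V" "z \<in> V" "1 \<le> lev y" "1 \<le> lev z" "(y, z) \<notin> E"
      using assms(2) by blast
    then have "mon w \<in> RB_gens V lev E" unfolding RB_gens_def by blast
    then show "mon w \<in> RB V lev E" by (rule RB.gen)
  qed
  then show ?thesis using expand[OF assms(1), of x] by simp
qed

lemma tsupp_emb: "supported_on a S \<Longrightarrow> tsupp (emb a) \<subseteq> (\<lambda>y. [y]) ` S"
proof
  fix w assume a: "supported_on a S" and w: "w \<in> tsupp (emb a)"
  then have nz: "emb a w \<noteq> 0" by (simp add: tsupp_def)
  show "w \<in> (\<lambda>y. [y]) ` S"
  proof (cases w)
    case Nil then show ?thesis using nz by (simp add: emb_def)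
  next
    case (Cons y r)
    show ?thesis
    proof (cases r)
      case Nil
      then have "a y \<noteq> 0" using nz Cons by (simp add: emb_def)
      then have "y \<in> S" using a by (simp add: supported_on_def)
      then show ?thesis using Cons Nil by simp
    next
      case (Cons z r') then show ?thesis using nz \<open>w = y # r\<close> by (simp add: emb_def)
    qed
  qed
qed

locale LG =
  fixes V :: "'v set" and lev :: "'v \<Rightarrow> nat" and E :: "('v \<times> 'v) set" and n :: nat
  assumes lg: "layered_graph V lev E" and n2: "2 \<le> n"
begin

abbreviation "Vn \<equiv> layer V lev n"
abbreviation "Vm \<equiv> layer V lev (n - 1)"

lemma finV: "finite V" using lg by (simp add: layered_graph_def)
lemma finVn: "finite Vn" using finV by (simp add: layer_def)
lemma finVm: "finite Vm" using finV by (simp add: layer_def)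

lemma edge: "(v, w) \<in> E \<Longrightarrow> v \<in> V \<and> w \<in> V \<and> lev w + 1 = lev v"
  using lg by (simp add: layered_graph_def)

lemma succ_ne: "v \<in> V \<Longrightarrow> 1 \<le> lev v \<Longrightarrow> \<exists>w. (v, w) \<in> E"
  using lg by (auto simp: layered_graph_def succs_def)

lemma succ_sub: "v \<in> Vn \<Longrightarrow> succs E v \<subseteq> Vm"
  using edge by (fastforce simp: succs_def layer_def)

lemma fin_succ: "finite (succs E v)"
proof -
  have "succs E v \<subseteq> V" using edge by (auto simp: succs_def)
  then show ?thesis using finV by (rule finite_subset)
qed

definition Kset :: "'v set \<Rightarrow> ('v \<Rightarrow> 'a::field) set" where
  "Kset A = {c. supported_on c Vm \<and> (\<forall>v\<in>A. \<forall>w w'. (v, w) \<in> E \<longrightarrow> (v, w') \<in> E \<longrightarrow> c w = c w')}"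

lemma row_RB:
  fixes c :: "'v \<Rightarrow> 'a::field"
  assumes v: "v \<in> Vn" and c: "supported_on c Vm"
    and const: "\<And>w w'. (v, w) \<in> E \<Longrightarrow> (v, w') \<in> E \<Longrightarrow> c w = c w'"
  shows "tmult (mon [v]) (emb c) \<in> RB V lev E"
proof -
  have vV: "v \<in> V" "lev v = n" using v by (auto simp: layer_def)
  obtain w0 where w0: "(v, w0) \<in> E" using succ_ne[OF vV(1)] vV n2 by auto
  let ?S = "succs E v"
  have SV: "?S \<subseteq> Vm" by (rule succ_sub[OF v])
  define G where "G = (\<lambda>u. \<Sum>w\<in>?S. mon [v, w] u :: 'a)"
  have "G \<in> RB_gens V lev E" unfolding RB_gens_def G_def using vV n2 by auto
  then have G: "G \<in> RB V lev E" by (rule RB.gen)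
  have R: "(\<lambda>u. \<Sum>w\<in>Vm - ?S. c w * mon [v, w] u) \<in> RB V lev E"
  proof (rule RB_sum)
    show "finite (Vm - ?S)" using finVm by simp
  next
    fix w assume w: "w \<in> Vm - ?S"
    then have "mon [v, w] \<in> RB_gens V lev E"
      unfolding RB_gens_def using vV n2 by (auto simp: layer_def succs_def)
    then show "mon [v, w] \<in> RB V lev E" by (rule RB.gen)
  qed
  have "tmult (mon [v]) (emb c) = (\<lambda>u. \<Sum>w\<in>Vm. c w * mon [v, w] u)"
    by (simp only: emb_expand[OF c finVm] tmult_sum_right tmult_scale_right tmult_mon_mon) simp
  also have "\<dots> = (\<lambda>u. c w0 * G u + (\<Sum>w\<in>Vm - ?S. c w * mon [v, w] u))"
  proof (rule ext)
    fix u
    have "(\<Sum>w\<in>Vm. c w * mon [v, w] u) = (\<Sum>w\<in>Vm - ?S. c w * mon [v, w] u) + (\<Sum>w\<in>?S. c w * mon [v, w] u)"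
      using sum.subset_diff[OF SV finVm] by simp
    also have "(\<Sum>w\<in>?S. c w * mon [v, w] u) = (\<Sum>w\<in>?S. c w0 * mon [v, w] u)"
      by (intro sum.cong refl) (metis const w0 succs_def mem_Collect_eq)
    also have "\<dots> = c w0 * G u" by (simp add: G_def sum_distrib_left)
    finally show "(\<Sum>w\<in>Vm. c w * mon [v, w] u) = c w0 * G u + (\<Sum>w\<in>Vm - ?S. c w * mon [v, w] u)"
      by simp
  qed
  also have "\<dots> \<in> RB V lev E" by (intro RB.add RB.scale G R)
  finally show ?thesis .
qed

lemma kappa_char:
  fixes a :: "'v \<Rightarrow> 'a::field"
  assumes a: "supported_on a Vn"
  shows "kappa V lev E n a = Kset {v. a v \<noteq> 0}"
proof (intro equalityI subsetI)
  fix c assume "c \<in> kappa V lev E n a"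
  then have c: "supported_on c Vm" and R: "tmult (emb a) (emb c) \<in> RB V lev E"
    by (auto simp: kappa_def)
  from RB_Inv[OF R] obtain k where k: "\<And>v w. (v, w) \<in> E \<Longrightarrow> tmult (emb a) (emb c) [v, w] = k v"
    unfolding Inv_def by blast
  have "\<forall>v\<in>{v. a v \<noteq> 0}. \<forall>w w'. (v, w) \<in> E \<longrightarrow> (v, w') \<in> E \<longrightarrow> c w = c w'"
  proof (intro ballI allI impI)
    fix v w w' assume "v \<in> {v. a v \<noteq> 0}" "(v, w) \<in> E" "(v, w') \<in> E"
    then have "a v * c w = a v * c w'" "a v \<noteq> 0" using k[of v w] k[of v w'] by (auto simp: emb_prod2)
    then show "c w = c w'" by simp
  qed
  then show "c \<in> Kset {v. a v \<noteq> 0}" using c unfolding Kset_def by blast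
next
  fix c :: "'v \<Rightarrow> 'a" assume "c \<in> Kset {v. a v \<noteq> 0}"
  then have c: "supported_on c Vm"
    and const: "\<And>v w w'. a v \<noteq> 0 \<Longrightarrow> (v, w) \<in> E \<Longrightarrow> (v, w') \<in> E \<Longrightarrow> c w = c w'"
    unfolding Kset_def by blast+
  let ?A = "{v \<in> Vn. a v \<noteq> 0}"
  have "tmult (emb a) (emb c) = (\<lambda>u. \<Sum>v\<in>Vn. a v * tmult (mon [v]) (emb c) u)"
    by (simp only: emb_expand[OF a finVn] tmult_sum_left tmult_scale_left)
  also have "\<dots> = (\<lambda>u. \<Sum>v\<in>?A. a v * tmult (mon [v]) (emb c) u)"
    by (rule ext, rule sum.mono_neutral_right) (use finVn in auto)
  also have "\<dots> \<in> RB V lev E"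
  proof (rule RB_sum)
    show "finite ?A" using finVn by simp
  next
    fix v assume v: "v \<in> ?A"
    show "tmult (mon [v]) (emb c) \<in> RB V lev E"
    proof (rule row_RB[OF _ c])
      show "v \<in> Vn" using v by simp
      fix w w' assume "(v, w) \<in> E" "(v, w') \<in> E"
      then show "c w = c w'" using const[of v w w'] v by blast
    qed
  qed
  finally show "c \<in> kappa V lev E n a" using c by (simp add: kappa_def)
qed

lemma delta_supp: "a \<in> S \<Longrightarrow> supported_on (delta a) S"
  by (simp add: supported_on_def delta_def)

lemma delta_nz: "{v. (delta a :: 'v \<Rightarrow> 'a::field) v \<noteq> 0} = {a}"
  by (auto simp: delta_def)

lemma kappa_delta: "a \<in> Vn \<Longrightarrow> kappa V lev E n (delta a :: 'v \<Rightarrow> 'a::field) = Kset {a}"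
proof -
  assume a: "a \<in> Vn"
  have "kappa V lev E n (delta a :: 'v \<Rightarrow> 'a) = Kset {v. (delta a :: 'v \<Rightarrow> 'a) v \<noteq> 0}"
    by (rule kappa_char) (rule delta_supp[OF a])
  also have "{v. (delta a :: 'v \<Rightarrow> 'a) v \<noteq> 0} = {a}" by (auto simp: delta_def)
  finally show ?thesis .
qed

lemma Kset_iff: "c \<in> Kset A \<longleftrightarrow> supported_on c Vm \<and> (\<forall>x\<in>A. c \<in> Kset {x})"
  by (auto simp: Kset_def)

lemma emb_delta: "emb (delta a) = (mon [a] :: 'v list \<Rightarrow> 'a::field)"
  by (rule ext) (simp add: emb_def delta_def mon_def split: list.split)

end


lemma pair_RB:
  assumes "finite (tsupp p)" "finite (tsupp q)"
    and "tsupp p \<subseteq> (\<lambda>y. [y]) ` A" "tsupp q \<subseteq> (\<lambda>z. [z]) ` B"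
    and "\<And>y. y \<in> A \<Longrightarrow> y \<in> V \<and> 1 \<le> lev y" "\<And>z. z \<in> B \<Longrightarrow> z \<in> V \<and> 1 \<le> lev z"
    and "\<And>y z. y \<in> A \<Longrightarrow> z \<in> B \<Longrightarrow> (y, z) \<notin> E"
  shows "tmult p q \<in> RB V lev E"
proof (rule RB_nonedge)
  show "finite (tsupp (tmult p q))" using assms(1,2) by (rule fin_tmult)
next
  fix w assume "w \<in> tsupp (tmult p q)"
  then have "w \<in> (\<lambda>(a, b). a @ b) ` (tsupp p \<times> tsupp q)"
    using tsupp_tmult by (rule subsetD[rotated])
  then obtain a b where w: "w = a @ b" "a \<in> tsupp p" "b \<in> tsupp q" by auto
  then obtain y z where "a = [y]" "y \<in> A" "b = [z]" "z \<in> B" using assms(3,4) by blast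
  then show "\<exists>y z. w = [y, z] \<and> y \<in> V \<and> z \<in> V \<and> 1 \<le> lev y \<and> 1 \<le> lev z \<and> (y, z) \<notin> E"
    using w assms(5-7) by auto
qed

context LG
begin

definition Fmap :: "('v \<Rightarrow> 'v \<Rightarrow> 'a) \<Rightarrow> 'v \<Rightarrow> ('v list \<Rightarrow> 'a::field)" where
  "Fmap \<phi> v = (if v \<in> V \<and> 1 \<le> lev v \<and> lev v < n then mon [v] else if v \<in> Vn then emb (\<phi> v) else (\<lambda>_. 0))"

definition Fset :: "'v \<Rightarrow> 'v set" where
  "Fset v = (if v \<in> V \<and> 1 \<le> lev v \<and> lev v < n then {v} else if v \<in> Vn then Vn else {})"

definition good :: "('v \<Rightarrow> 'v \<Rightarrow> 'a::field) \<Rightarrow> bool" where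
  "good \<phi> \<longleftrightarrow> (\<forall>v\<in>Vn. supported_on (\<phi> v) Vn \<and> kappa V lev E n (delta v) \<subseteq> kappa V lev E n (\<phi> v))"

lemma kappa_delta_mem: "v \<in> Vn \<Longrightarrow> (c::'v\<Rightarrow>'a::field) \<in> Kset {v} \<Longrightarrow> c \<in> kappa V lev E n (delta v)"
  by (frule kappa_delta[where 'a='a]) simp

lemma Fset_V: "y \<in> Fset v \<Longrightarrow> y \<in> V \<and> 1 \<le> lev y \<and> (lev y = lev v \<or> lev y = n)"
  using n2 by (auto simp: Fset_def layer_def split: if_splits)

lemma Fset_lev: "y \<in> Fset v \<Longrightarrow> lev y = (if lev v < n then lev v else n)"
  by (auto simp: Fset_def layer_def split: if_splits)

lemma Fset_nonempty_lev: "y \<in> Fset v \<Longrightarrow> v \<in> V \<and> 1 \<le> lev v \<and> lev v \<le> n"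
  using n2 by (auto simp: Fset_def layer_def split: if_splits)

lemma fin_F: "good \<phi> \<Longrightarrow> finite (tsupp (Fmap \<phi> v))"
  by (auto simp: Fmap_def good_def tsupp_mon tsupp_def[of "\<lambda>_. 0"] intro: fin_emb[OF _ finVn])

lemma tsupp_F: "good \<phi> \<Longrightarrow> tsupp (Fmap \<phi> v) \<subseteq> (\<lambda>y. [y]) ` Fset v"
  by (auto simp: Fmap_def Fset_def good_def tsupp_mon tsupp_def[of "\<lambda>_. 0"] dest: tsupp_emb[of _ Vn])

lemma F_TA: "good \<phi> \<Longrightarrow> Fmap \<phi> v \<in> TA V lev n"
proof -
  assume g: "good \<phi>"
  have "\<forall>w\<in>tsupp (Fmap \<phi> v). \<forall>x\<in>set w. x \<in> V \<and> 1 \<le> lev x \<and> lev x \<le> n"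
  proof (intro ballI)
    fix w x assume w: "w \<in> tsupp (Fmap \<phi> v)" and x: "x \<in> set w"
    from w tsupp_F[OF g] obtain y where "w = [y]" "y \<in> Fset v" by blast
    then show "x \<in> V \<and> 1 \<le> lev x \<and> lev x \<le> n" using x Fset_V Fset_lev
      by (metis empty_iff le_refl less_imp_le_nat list.set(1) list.set(2) singletonD)
  qed
  then show ?thesis using fin_F[OF g] by (simp add: TA_def)
qed

lemma F_lin: "good \<phi> \<Longrightarrow> Fmap \<phi> v = (\<lambda>u. \<Sum>y\<in>Fset v. (if lev v < n then 1 else \<phi> v y) * mon [y] u)"
  by (auto simp: Fmap_def Fset_def good_def emb_expand[OF _ finVn] layer_def)

lemma fin_Fset: "finite (Fset v)"
  using finVn by (simp add: Fset_def)

lemma lmult_F: "good \<phi> \<Longrightarrow> y \<in> RB V lev E \<Longrightarrow> tmult (Fmap \<phi> v) y \<in> RB V lev E"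
  by (subst F_lin, assumption, rule RB_lmult_lin[OF _ fin_Fset]) (use Fset_V in blast)+

lemma rmult_F: "good \<phi> \<Longrightarrow> y \<in> RB V lev E \<Longrightarrow> tmult y (Fmap \<phi> v) \<in> RB V lev E"
  by (subst F_lin, assumption, rule RB_rmult_lin[OF _ fin_Fset]) (use Fset_V in blast)+

lemma Fset_low: "lev v < n \<Longrightarrow> y \<in> Fset v \<Longrightarrow> y = v"
  by (auto simp: Fset_def layer_def split: if_splits)

lemma F_low: "v \<in> V \<Longrightarrow> 1 \<le> lev v \<Longrightarrow> lev v < n \<Longrightarrow> Fmap \<phi> v = mon [v]"
  by (simp add: Fmap_def)

lemma F_top: "v \<in> Vn \<Longrightarrow> Fmap \<phi> v = emb (\<phi> v)"
  using n2 by (simp add: Fmap_def layer_def)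

lemma F_high: "n < lev v \<Longrightarrow> Fmap \<phi> v = (\<lambda>_. 0)"
  by (simp add: Fmap_def layer_def)

lemma subst_pair: "subst g (mon [v, w]) = tmult (g v) (g w)"
  by (simp add: subst_mon tmult_Nil_right)

lemma gen_pair:
  fixes \<phi> :: "'v \<Rightarrow> 'v \<Rightarrow> 'a::field"
  assumes g: "good \<phi>" and v: "v \<in> V" "1 \<le> lev v" and w: "w \<in> V" "1 \<le> lev w" and ne: "(v, w) \<notin> E"
  shows "tmult (Fmap \<phi> v) (Fmap \<phi> w) \<in> RB V lev E"
proof (cases "lev v = n \<and> lev w + 1 = n")
  case True
  then have vn: "v \<in> Vn" and wm: "w \<in> Vm" using v w by (auto simp: layer_def)
  have Fw: "Fmap \<phi> w = emb (delta w)" using True w by (simp add: F_low emb_delta)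
  have "(delta w :: 'v \<Rightarrow> 'a) \<in> Kset {v}"
    unfolding Kset_def using ne wm by (auto simp: delta_def supported_on_def)
  then have "(delta w :: 'v \<Rightarrow> 'a) \<in> kappa V lev E n (delta v)" by (rule kappa_delta_mem[OF vn])
  then have "delta w \<in> kappa V lev E n (\<phi> v)" using g vn by (auto simp: good_def)
  then show ?thesis using F_top[OF vn, of \<phi>] Fw by (simp add: kappa_def)
next
  case False
  show ?thesis
  proof (rule pair_RB[OF fin_F[OF g] fin_F[OF g] tsupp_F[OF g] tsupp_F[OF g]])
    fix y assume "y \<in> Fset v" then show "y \<in> V \<and> 1 \<le> lev y" using Fset_V by blast
  next
    fix z assume "z \<in> Fset w" then show "z \<in> V \<and> 1 \<le> lev z" using Fset_V by blast
  next
    fix y z assume y: "y \<in> Fset v" and z: "z \<in> Fset w"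
    show "(y, z) \<notin> E"
    proof
      assume yz: "(y, z) \<in> E"
      then have l: "lev z + 1 = lev y" using edge by blast
      have ly: "lev y = (if lev v < n then lev v else n)" using Fset_lev[OF y] .
      have lz: "lev z = (if lev w < n then lev w else n)" using Fset_lev[OF z] .
      have "lev v \<le> n" "lev w \<le> n" using Fset_nonempty_lev y z by blast+
      show False
      proof (cases "lev v < n")
        case True
        then have "y = v" using Fset_low y by blast
        show False
        proof (cases "lev w < n")
          case True
          then have "z = w" using Fset_low z by blast
          then show False using yz ne \<open>y = v\<close> by simp
        next
          case False then show False using l ly lz \<open>lev v < n\<close> by simp
        qed
      next
        case F1: False
        show False
        proof (cases "lev w < n")
          case True then show False using l ly lz F1 \<open>lev v \<le> n\<close> \<open>\<not> (lev v = n \<and> lev w + 1 = n)\<close> by simp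
        next
          case False then show False using l ly lz F1 by simp
        qed
      qed
    qed
  qed
qed

lemma gen_sum:
  fixes \<phi> :: "'v \<Rightarrow> 'v \<Rightarrow> 'a::field"
  assumes g: "good \<phi>" and v: "v \<in> V" "2 \<le> lev v"
  shows "subst (Fmap \<phi>) (\<lambda>u. \<Sum>w\<in>succs E v. mon [v, w] u) \<in> RB V lev E"
proof -
  let ?S = "succs E v"
  let ?F = "Fmap \<phi>"
  have "subst ?F (\<lambda>u. \<Sum>w\<in>?S. mon [v, w] u) = subst ?F (\<lambda>u. \<Sum>w\<in>?S. 1 * mon [v, w] u)"
    by simp
  also have "\<dots> = (\<lambda>u. \<Sum>w\<in>?S. 1 * subst ?F (mon [v, w]) u)"
    by (rule subst_lin) (simp_all add: fin_succ tsupp_mon)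
  also have "\<dots> = (\<lambda>u. \<Sum>w\<in>?S. tmult (?F v) (?F w) u)"
    by (simp add: subst_pair)
  finally have eq: "subst ?F (\<lambda>u. \<Sum>w\<in>?S. mon [v, w] u) = (\<lambda>u. \<Sum>w\<in>?S. tmult (?F v) (?F w) u)" .
  consider "n < lev v" | "lev v < n" | "lev v = n" by linarith
  then show ?thesis
  proof cases
    case 1
    then show ?thesis unfolding eq F_high[OF 1] tmult_zero_left using RB.zero by simp
  next
    case 2
    have "(\<lambda>u. \<Sum>w\<in>?S. tmult (?F v) (?F w) u) = (\<lambda>u. \<Sum>w\<in>?S. mon [v, w] u)"
    proof (rule ext, rule sum.cong[OF refl])
      fix u w assume "w \<in> ?S"
      then have "w \<in> V" "lev w + 1 = lev v" using edge by (auto simp: succs_def)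
      then have "?F w = mon [w]" using 2 v by (intro F_low) auto
      moreover have "?F v = mon [v]" using 2 v by (intro F_low) auto
      ultimately show "tmult (?F v) (?F w) u = mon [v, w] u" by (simp add: tmult_mon_mon)
    qed
    moreover have "(\<lambda>u. \<Sum>w\<in>?S. mon [v, w] u) \<in> RB_gens V lev E"
      unfolding RB_gens_def using v by auto
    then have "(\<lambda>u. \<Sum>w\<in>?S. mon [v, w] u) \<in> RB V lev E" by (rule RB.gen)
    ultimately show ?thesis unfolding eq by simp
  next
    case 3
    then have vn: "v \<in> Vn" using v by (simp add: layer_def)
    define ind where "ind = (\<lambda>w. if w \<in> ?S then 1 else 0 :: 'a)"
    have si: "supported_on ind ?S" by (simp add: ind_def supported_on_def)
    have "(\<lambda>u. \<Sum>w\<in>?S. tmult (?F v) (?F w) u) = (\<lambda>u. \<Sum>w\<in>?S. 1 * tmult (emb (\<phi> v)) (mon [w]) u)"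
    proof (rule ext, rule sum.cong[OF refl])
      fix u w assume "w \<in> ?S"
      then have "w \<in> V" "lev w + 1 = lev v" using edge by (auto simp: succs_def)
      then have "?F w = mon [w]" using 3 v n2 by (intro F_low) auto
      then show "tmult (?F v) (?F w) u = 1 * tmult (emb (\<phi> v)) (mon [w]) u" by (simp add: F_top[OF vn])
    qed
    also have "\<dots> = tmult (emb (\<phi> v)) (\<lambda>u. \<Sum>w\<in>?S. 1 * mon [w] u)"
      by (simp only: tmult_sum_right tmult_scale_right)
    also have "(\<lambda>u. \<Sum>w\<in>?S. 1 * mon [w] u) = emb ind"
      unfolding emb_expand[OF si fin_succ] by (rule ext, rule sum.cong) (auto simp: ind_def)
    finally have eq2: "(\<lambda>u. \<Sum>w\<in>?S. tmult (?F v) (?F w) u) = tmult (emb (\<phi> v)) (emb ind)" .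
    have "ind \<in> Kset {v}"
      unfolding Kset_def using succ_sub[OF vn] by (auto simp: ind_def supported_on_def succs_def)
    then have "ind \<in> kappa V lev E n (delta v)" by (rule kappa_delta_mem[OF vn])
    then have "ind \<in> kappa V lev E n (\<phi> v)" using g vn by (auto simp: good_def)
    then show ?thesis unfolding eq eq2 by (simp add: kappa_def)
  qed
qed

lemma hom_RB:
  assumes g: "good \<phi>"
  shows "x \<in> RB V lev E \<Longrightarrow> subst (Fmap \<phi>) x \<in> RB V lev E"
proof (induction rule: RB.induct)
  case zero then show ?case by (simp add: subst_zero RB.zero)
next
  case (gen g')
  then consider (m) v w where "g' = mon [v, w]" "v \<in> V" "w \<in> V" "1 \<le> lev v" "1 \<le> lev w" "(v, w) \<notin> E"
    | (s) v where "g' = (\<lambda>u. \<Sum>w\<in>succs E v. mon [v, w] u)" "v \<in> V" "2 \<le> lev v"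
    unfolding RB_gens_def by auto
  then show ?case
  proof cases
    case m then show ?thesis using gen_pair[OF g] by (simp add: subst_pair)
  next
    case s then show ?thesis using gen_sum[OF g] by simp
  qed
next
  case (add x y)
  then show ?case by (simp add: subst_add RB_fin RB.add)
next
  case (scale x c)
  then show ?case by (simp add: subst_scale RB_fin RB.scale)
next
  case (lmult x v)
  then show ?case by (simp add: subst_hom RB_fin tsupp_mon subst_letter lmult_F[OF g])
next
  case (rmult x v)
  then show ?case by (simp add: subst_hom RB_fin tsupp_mon subst_letter rmult_F[OF g])
qed

end


lemma fvs: "vector_space (\<lambda>(c::'a::field) (f::'b \<Rightarrow> 'a) x. c * f x)"
  by unfold_locales (simp_all add: fun_eq_iff algebra_simps)

global_interpretation fv: vector_space "\<lambda>(c::'a::field) (f::'b \<Rightarrow> 'a) x. c * f x"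
  by (rule fvs)

lemma fsum_apply: "(\<Sum>i\<in>I. (f i :: 'b \<Rightarrow> 'a::comm_monoid_add)) x = (\<Sum>i\<in>I. f i x)"
  by (rule sum_fun_apply)

lemma D1:
  fixes S T W :: "('b \<Rightarrow> 'a::field) set"
  assumes "S \<subseteq> T" "T \<subseteq> fv.span W" "finite W"
  shows "fv.dim S \<le> fv.dim T"
proof -
  obtain B where B: "B \<subseteq> S" "fv.independent B" "S \<subseteq> fv.span B" "card B = fv.dim S"
    by (rule fv.basis_exists)
  obtain C where C: "C \<subseteq> T" "fv.independent C" "T \<subseteq> fv.span C" "card C = fv.dim T"
    by (rule fv.basis_exists)
  have "finite C" using fv.independent_span_bound[OF assms(3) C(2)] C(1) assms(2) by auto
  moreover have "B \<subseteq> fv.span C" using B(1) assms(1) C(3) by auto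
  ultimately have "card B \<le> card C" using fv.independent_span_bound[OF _ B(2)] by auto
  then show ?thesis using B C by simp
qed

lemma D2:
  fixes S T W :: "('b \<Rightarrow> 'a::field) set"
  assumes ST: "S \<subseteq> T" and TW: "T \<subseteq> fv.span W" and W: "finite W"
    and dim: "fv.dim T \<le> fv.dim S" and sub: "fv.subspace S"
  shows "T \<subseteq> S"
proof -
  obtain B where B: "B \<subseteq> S" "fv.independent B" "S \<subseteq> fv.span B" "card B = fv.dim S"
    by (rule fv.basis_exists)
  obtain C where C: "C \<subseteq> T" "fv.independent C" "T \<subseteq> fv.span C" "card C = fv.dim T"
    by (rule fv.basis_exists)
  have finC: "finite C" using fv.independent_span_bound[OF W C(2)] C(1) TW by auto
  have finB: "finite B" using fv.independent_span_bound[OF W B(2)] B(1) ST TW by auto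
  have "T \<subseteq> fv.span B"
  proof
    fix a assume a: "a \<in> T"
    show "a \<in> fv.span B"
    proof (rule ccontr)
      assume na: "a \<notin> fv.span B"
      then have ind: "fv.independent (insert a B)" using B(2) fv.independent_insertI by blast
      have "insert a B \<subseteq> fv.span C" using a B(1) ST C(3) by auto
      then have "card (insert a B) \<le> card C" using fv.independent_span_bound[OF finC ind] by auto
      moreover have "a \<notin> B" using na fv.span_base by blast
      ultimately have "card B + 1 \<le> card C" using finB by simp
      then show False using B(4) C(4) dim by simp
    qed
  qed
  also have "fv.span B \<subseteq> S" using B(1) sub by (rule fv.span_minimal)
  finally show ?thesis .
qed

lemma D4:
  fixes B T :: "('b \<Rightarrow> 'a::field) set"
  assumes B: "fv.independent B" "B \<subseteq> fv.span T" and T: "finite T" "fv.independent T"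
    and c: "card T \<le> card B"
  shows "T \<subseteq> fv.span B"
proof
  fix t assume t: "t \<in> T"
  show "t \<in> fv.span B"
  proof (rule ccontr)
    assume nt: "t \<notin> fv.span B"
    then have ind: "fv.independent (insert t B)" using B(1) fv.independent_insertI by blast
    have "insert t B \<subseteq> fv.span T" using t B(2) fv.span_base by blast
    then have fc: "finite (insert t B) \<and> card (insert t B) \<le> card T"
      using fv.independent_span_bound[OF T(1) ind] by auto
    moreover have "t \<notin> B" using nt fv.span_base by blast
    ultimately have "card B + 1 \<le> card T" using card_insert_disjoint[of B t] by auto
    then show False using c by simp
  qed
qed

lemma delta_inj: "inj (delta :: 'b \<Rightarrow> 'b \<Rightarrow> 'a::field)"
proof (rule injI)
  fix x y :: 'b assume "(delta x :: 'b \<Rightarrow> 'a) = delta y"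
  then have "(delta x :: 'b \<Rightarrow> 'a) x = delta y x" by simp
  then show "x = y" by (simp add: delta_def split: if_splits)
qed

lemma supp_span:
  fixes c :: "'b \<Rightarrow> 'a::field"
  assumes "supported_on c S" "finite S"
  shows "c \<in> fv.span (delta ` S)"
proof -
  have "c = (\<Sum>s\<in>S. (\<lambda>x. c s * delta s x))"
  proof (rule ext)
    fix x
    have "(\<Sum>s\<in>S. (\<lambda>x. c s * delta s x)) x = (\<Sum>s\<in>S. if s = x then c x else 0)"
      unfolding fsum_apply by (intro sum.cong) (auto simp: delta_def)
    also have "\<dots> = c x" using assms by (auto simp: supported_on_def)
    finally show "c x = (\<Sum>s\<in>S. (\<lambda>x. c s * delta s x)) x" by simp
  qed
  also have "\<dots> \<in> fv.span (delta ` S)"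
    by (intro fv.span_sum) (auto intro: fv.span_scale[of _ _ "c s" for s, simplified] fv.span_base)
  finally show ?thesis .
qed

lemma span_supp:
  fixes c :: "'b \<Rightarrow> 'a::field"
  assumes "c \<in> fv.span (delta ` S)"
  shows "supported_on c S"
  using assms
proof (induction rule: fv.span_induct_alt)
  case base then show ?case by (simp add: supported_on_def)
next
  case (step a x y)
  then obtain s where s: "s \<in> S" "x = delta s" by blast
  show ?case unfolding supported_on_def
  proof (intro allI impI)
    fix v assume nz: "((\<lambda>xa. a * x xa) + y) v \<noteq> 0"
    show "v \<in> S"
    proof (cases "v = s")
      case True then show ?thesis using s by simp
    next
      case False
      then have "y v \<noteq> 0" using nz s by (simp add: delta_def)
      then show ?thesis using step.IH by (simp add: supported_on_def)
    qed
  qed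
qed

lemma span_supp2:
  fixes c :: "'b \<Rightarrow> 'a::field"
  assumes "c \<in> fv.span A" "\<And>x. x \<in> A \<Longrightarrow> supported_on x S"
  shows "supported_on c S"
  using assms
proof (induction rule: fv.span_induct_alt)
  case base then show ?case by (simp add: supported_on_def)
next
  case (step a x y)
  then have "supported_on x S" "supported_on y S" by blast+
  then show ?case unfolding supported_on_def plus_fun_def
    by (metis add.right_neutral mult_zero_right)
qed

lemma indep_delta:
  assumes "finite S"
  shows "fv.independent (delta ` S :: ('b \<Rightarrow> 'a::field) set)"
proof (rule fv.independent_if_scalars_zero)
  show "finite (delta ` S :: ('b \<Rightarrow> 'a) set)" using assms by simp
next
  fix f :: "('b \<Rightarrow> 'a) \<Rightarrow> 'a" and x :: "'b \<Rightarrow> 'a"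
  assume z: "(\<Sum>x\<in>delta ` S. (\<lambda>y. f x * x y)) = 0" and x: "x \<in> delta ` S"
  then obtain s where s: "s \<in> S" "x = delta s" by blast
  have "0 = (\<Sum>x\<in>delta ` S. (\<lambda>y. f x * x y)) s" using z by simp
  also have "\<dots> = (\<Sum>t\<in>S. f (delta t) * delta t s)"
    unfolding fsum_apply by (subst sum.reindex) (auto intro: inj_on_subset[OF delta_inj])
  also have "\<dots> = (\<Sum>t\<in>S. if t = s then f (delta s) else 0)"
    by (intro sum.cong) (auto simp: delta_def)
  also have "\<dots> = f (delta s)" using s assms by simp
  finally show "f x = 0" using s by simp
qed

lemma lin_span_iff:
  fixes c :: "'b \<Rightarrow> 'a::field"
  shows "in_lin_span c b i \<longleftrightarrow> c \<in> fv.span (b ` {..<i})"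
proof
  assume "in_lin_span c b i"
  then obtain \<alpha> where a: "\<And>v. c v = (\<Sum>j<i. \<alpha> j * b j v)" by (auto simp: in_lin_span_def)
  have "c = (\<Sum>j<i. (\<lambda>v. \<alpha> j * b j v))" by (rule ext) (simp add: fsum_apply a)
  also have "\<dots> \<in> fv.span (b ` {..<i})"
    by (intro fv.span_sum) (auto intro: fv.span_scale[of _ _ "\<alpha> j" for j, simplified] fv.span_base)
  finally show "c \<in> fv.span (b ` {..<i})" .
next
  assume "c \<in> fv.span (b ` {..<i})"
  then show "in_lin_span c b i"
  proof (induction rule: fv.span_induct_alt)
    case base then show ?case by (auto simp: in_lin_span_def intro: exI[of _ "\<lambda>_. 0"])
  next
    case (step a x y)
    then obtain j where j: "j < i" "x = b j" by blast
    from step obtain \<alpha> where a: "\<And>v. y v = (\<Sum>j<i. \<alpha> j * b j v)" by (auto simp: in_lin_span_def)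
    define \<beta> where "\<beta> = (\<lambda>l. \<alpha> l + (if l = j then a else 0))"
    have "\<And>v. (\<lambda>v. a * x v) v + y v = (\<Sum>l<i. \<beta> l * b l v)"
      using j by (simp add: \<beta>_def a distrib_right sum.distrib if_distrib[of "\<lambda>z. z * _"] cong: if_cong)
    then show ?case unfolding in_lin_span_def by (intro exI[of _ \<beta>]) simp
  qed
qed

lemma card_fibers:
  assumes "finite A" "finite P" "f ` A \<subseteq> P"
  shows "card A = (\<Sum>c\<in>P. card {a\<in>A. f a = c})"
  using sum.group[OF assms(1) assms(2) assms(3), of "\<lambda>_. 1::nat"] by simp

lemma sum_le_eq:
  fixes f g :: "'c \<Rightarrow> nat"
  assumes "finite P" "\<And>x. x \<in> P \<Longrightarrow> f x \<le> g x" "sum f P = sum g P" "x \<in> P"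
  shows "f x = g x"
proof (rule ccontr)
  assume "f x \<noteq> g x"
  then have "f x < g x" using assms(2,4) by force
  then have "sum f P < sum g P" using sum_strict_mono_ex1[OF assms(1)] assms(2,4) by blast
  then show False using assms(3) by simp
qed

lemma fiber_bij:
  assumes A: "finite A" and B: "finite B"
    and c: "\<And>x. card {a\<in>A. f a = x} = card {b\<in>B. g b = x}"
  shows "\<exists>h. bij_betw h A B \<and> (\<forall>a\<in>A. g (h a) = f a)"
proof -
  have "\<forall>x. \<exists>hx. bij_betw hx {a\<in>A. f a = x} {b\<in>B. g b = x}"
    using c A B by (auto intro!: finite_same_card_bij)
  then obtain H where H: "\<And>x. bij_betw (H x) {a\<in>A. f a = x} {b\<in>B. g b = x}" by metis
  define h where "h a = H (f a) a" for a
  have hA: "\<And>a. a \<in> A \<Longrightarrow> h a \<in> B \<and> g (h a) = f a"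
    using H unfolding h_def bij_betw_def by blast
  have "inj_on h A"
  proof (rule inj_onI)
    fix a a' assume a: "a \<in> A" "a' \<in> A" "h a = h a'"
    then have "f a = f a'" using hA by metis
    then have "H (f a) a = H (f a) a'" using a(3) by (simp add: h_def)
    moreover have "inj_on (H (f a)) {x\<in>A. f x = f a}" using H[of "f a"] by (simp add: bij_betw_def)
    ultimately show "a = a'" using a \<open>f a = f a'\<close> by (auto dest: inj_onD)
  qed
  moreover have "h ` A = B"
  proof
    show "h ` A \<subseteq> B" using hA by blast
  next
    show "B \<subseteq> h ` A"
    proof
      fix y assume y: "y \<in> B"
      have "y \<in> H (g y) ` {a\<in>A. f a = g y}" using H[of "g y"] y by (simp add: bij_betw_def)
      then obtain a where "a \<in> A" "f a = g y" "y = H (g y) a" by blast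
      then have "y = h a" by (simp add: h_def)
      then show "y \<in> h ` A" using \<open>a \<in> A\<close> by blast
    qed
  qed
  ultimately show ?thesis using hA by (auto simp: bij_betw_def)
qed


context LG
begin

lemma dimK:
  assumes a: "a \<in> Vn"
  shows "fv.dim (Kset {a} :: ('v \<Rightarrow> 'c::field) set) = card (Vm - succs E a) + 1"
proof -
  let ?S = "succs E a"
  have aV: "a \<in> V" "lev a = n" using a by (auto simp: layer_def)
  obtain s0 where s0: "(a, s0) \<in> E" using succ_ne[OF aV(1)] aV n2 by auto
  have s0S: "s0 \<in> ?S" using s0 by (simp add: succs_def)
  have SV: "?S \<subseteq> Vm" by (rule succ_sub[OF a])
  define ind where "ind = (\<lambda>w. if w \<in> ?S then 1 else 0 :: 'c)"
  define B where "B = insert ind (delta ` (Vm - ?S))"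
  have ind_notin: "ind \<notin> delta ` (Vm - ?S)"
  proof
    assume "ind \<in> delta ` (Vm - ?S)"
    then obtain w where w: "w \<in> Vm - ?S" "ind = delta w" by blast
    then have "ind w = delta w w" by simp
    then show False using w(1) by (simp add: ind_def delta_def)
  qed
  have finB: "finite B" using finVm by (simp add: B_def)
  have cardB: "card B = card (Vm - ?S) + 1"
    unfolding B_def using ind_notin finVm
    by (simp add: card_image inj_on_subset[OF delta_inj])
  have BK: "B \<subseteq> Kset {a}"
  proof
    fix x assume "x \<in> B"
    then consider "x = ind" | w where "w \<in> Vm - ?S" "x = delta w" unfolding B_def by blast
    then show "x \<in> Kset {a}"
    proof cases
      case 1
      have "supported_on ind Vm" using SV by (auto simp: ind_def supported_on_def)
      moreover have "\<And>w w'. (a, w) \<in> E \<Longrightarrow> (a, w') \<in> E \<Longrightarrow> ind w = ind w'"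
        by (simp add: ind_def succs_def)
      ultimately show ?thesis unfolding 1 Kset_def by blast
    next
      case (2 w)
      have "supported_on x Vm" using 2 by (simp add: delta_supp)
      moreover have "\<And>w1 w2. (a, w1) \<in> E \<Longrightarrow> (a, w2) \<in> E \<Longrightarrow> x w1 = x w2"
        using 2 by (auto simp: delta_def succs_def)
      ultimately show ?thesis unfolding Kset_def by blast
    qed
  qed
  have KB: "Kset {a} \<subseteq> fv.span B"
  proof
    fix c :: "'v \<Rightarrow> 'c" assume c: "c \<in> Kset {a}"
    have sc: "supported_on c Vm" and cc: "\<And>w w'. (a, w) \<in> E \<Longrightarrow> (a, w') \<in> E \<Longrightarrow> c w = c w'"
      using c unfolding Kset_def by blast+
    have "c = (\<lambda>x. c s0 * ind x) + (\<Sum>w\<in>Vm - ?S. (\<lambda>x. c w * delta w x))"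
    proof (rule ext)
      fix x
      have "(\<Sum>w\<in>Vm - ?S. (\<lambda>x. c w * delta w x)) x = (\<Sum>w\<in>Vm - ?S. if w = x then c x else 0)"
        unfolding fsum_apply by (intro sum.cong) (auto simp: delta_def)
      also have "\<dots> = (if x \<in> Vm - ?S then c x else 0)" using finVm by simp
      finally have e: "(\<Sum>w\<in>Vm - ?S. (\<lambda>x. c w * delta w x)) x = (if x \<in> Vm - ?S then c x else 0)" .
      show "c x = ((\<lambda>x. c s0 * ind x) + (\<Sum>w\<in>Vm - ?S. (\<lambda>x. c w * delta w x))) x"
      proof (cases "x \<in> ?S")
        case True
        then have "c x = c s0" using cc[of x s0] s0 by (simp add: succs_def)
        moreover have "x \<notin> Vm - ?S" using True by simp
        ultimately show ?thesis using e True by (simp add: ind_def)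
      next
        case False
        then show ?thesis using e sc by (auto simp: ind_def supported_on_def)
      qed
    qed
    also have "\<dots> \<in> fv.span B"
    proof (rule fv.span_add)
      show "(\<lambda>x. c s0 * ind x) \<in> fv.span B"
        using fv.span_scale[OF fv.span_base[of ind B], of "c s0"] by (simp add: B_def)
      show "(\<Sum>w\<in>Vm - ?S. (\<lambda>x. c w * delta w x)) \<in> fv.span B"
      proof (rule fv.span_sum)
        fix w assume "w \<in> Vm - ?S"
        then have "delta w \<in> B" by (simp add: B_def)
        then show "(\<lambda>x. c w * delta w x) \<in> fv.span B"
          using fv.span_scale[OF fv.span_base[of "delta w" B], of "c w"] by simp
      qed
    qed
    finally show "c \<in> fv.span B" .
  qed
  have indB: "fv.independent B"
  proof (rule fv.independent_if_scalars_zero[OF finB])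
    fix f :: "('v \<Rightarrow> 'c) \<Rightarrow> 'c" and x :: "'v \<Rightarrow> 'c"
    assume z: "(\<Sum>x\<in>B. (\<lambda>y. f x * x y)) = 0" and x: "x \<in> B"
    have ev: "(\<Sum>x\<in>B. (\<lambda>y. f x * x y)) v = f ind * ind v + (\<Sum>w\<in>Vm - ?S. f (delta w) * delta w v)" for v
      unfolding B_def fsum_apply using ind_notin finVm
      by (simp add: sum.reindex inj_on_subset[OF delta_inj])
    have dw: "f (delta w) = 0" if w: "w \<in> Vm - ?S" for w
    proof -
      have "(\<Sum>w'\<in>Vm - ?S. f (delta w') * delta w' w) = (\<Sum>w'\<in>Vm - ?S. if w' = w then f (delta w) else 0)"
        by (intro sum.cong) (auto simp: delta_def)
      also have "\<dots> = f (delta w)" using w finVm by simp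
      finally show ?thesis using ev[of w] z w by (simp add: ind_def)
    qed
    have "f ind = 0"
    proof -
      have "(\<Sum>w'\<in>Vm - ?S. f (delta w') * delta w' s0) = 0"
        using s0S by (intro sum.neutral) (auto simp: delta_def)
      then show ?thesis using ev[of s0] z s0S by (simp add: ind_def)
    qed
    then show "f x = 0" using x dw unfolding B_def by blast
  qed
  have "card B = fv.dim (Kset {a} :: ('v \<Rightarrow> 'c) set)"
    by (rule fv.basis_card_eq_dim[OF BK KB indB])
  then show ?thesis using cardB by simp
qed

lemma dim_kappa_delta:
  assumes "a \<in> Vn"
  shows "fv.dim (kappa V lev E n (delta a :: 'v \<Rightarrow> 'c::field)) = card (Vm - succs E a) + 1"
  using kappa_delta[OF assms, where 'a='c] dimK[OF assms, where 'c='c] by simp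

end

locale LGB = LG V lev E n for V :: "'v set" and lev E n +
  fixes b :: "nat \<Rightarrow> 'v \<Rightarrow> 'a::field"
  assumes basis: "is_basis_Bn V lev n b"
    and hyp: "\<forall>i < card (layer V lev n). \<forall>a \<in> layer V lev n.
           \<not> in_lin_span (delta a) b i \<longrightarrow>
           fdim (kappa V lev E n (delta a :: 'v \<Rightarrow> 'a)) \<le> fdim (kappa V lev E n (b i))"
begin

abbreviation "k \<equiv> card Vn"

abbreviation kap :: "('v \<Rightarrow> 'a) \<Rightarrow> ('v \<Rightarrow> 'a) set" where
  "kap x \<equiv> kappa V lev E n x"

definition d :: "'v \<Rightarrow> nat" where
  "d u = fv.dim (kap (delta u))"

lemma hyp': "i < k \<Longrightarrow> a \<in> Vn \<Longrightarrow> \<not> in_lin_span (delta a) b i \<Longrightarrow> d a \<le> fv.dim (kap (b i))"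
  using hyp dim_kappa_delta unfolding d_def by metis

lemma b_supp: "i < k \<Longrightarrow> supported_on (b i) Vn"
  using basis by (simp add: is_basis_Bn_def)

lemma b_indep0: "(\<forall>v. (\<Sum>i<k. \<alpha> i * b i v) = 0) \<Longrightarrow> i < k \<Longrightarrow> \<alpha> i = 0"
  using basis by (simp add: is_basis_Bn_def)

lemma b_inj: "inj_on b {..<k}"
proof (rule inj_onI, rule ccontr)
  fix i j assume i: "i \<in> {..<k}" and j: "j \<in> {..<k}" and e: "b i = b j" and ne: "i \<noteq> j"
  define \<alpha> where "\<alpha> = (\<lambda>l. if l = i then 1 else if l = j then -1 else (0::'a))"
  have "\<forall>v. (\<Sum>l<k. \<alpha> l * b l v) = 0"
  proof
    fix v
    have "(\<Sum>l<k. \<alpha> l * b l v) = (\<Sum>l<k. (if l = i then b i v else 0) + (if l = j then - b j v else 0))"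
      by (intro sum.cong) (auto simp: \<alpha>_def ne)
    also have "\<dots> = b i v - b j v" using i j by (simp add: sum.distrib)
    finally show "(\<Sum>l<k. \<alpha> l * b l v) = 0" using e by simp
  qed
  then have "\<alpha> i = 0" using b_indep0 i by blast
  then show False by (simp add: \<alpha>_def)
qed

lemma b_indep: "fv.independent (b ` {..<k})"
proof (rule fv.independent_if_scalars_zero)
  show "finite (b ` {..<k})" by simp
next
  fix f :: "('v \<Rightarrow> 'a) \<Rightarrow> 'a" and x :: "'v \<Rightarrow> 'a"
  assume z: "(\<Sum>x\<in>b ` {..<k}. (\<lambda>y. f x * x y)) = 0" and x: "x \<in> b ` {..<k}"
  then obtain i where i: "i < k" "x = b i" by blast
  have "\<forall>v. (\<Sum>l<k. f (b l) * b l v) = 0"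
  proof
    fix v
    have "(\<Sum>l<k. f (b l) * b l v) = (\<Sum>x\<in>b ` {..<k}. (\<lambda>y. f x * x y)) v"
      unfolding fsum_apply by (subst sum.reindex[OF b_inj]) simp
    then show "(\<Sum>l<k. f (b l) * b l v) = 0" using z by simp
  qed
  then show "f x = 0" using b_indep0[of "\<lambda>l. f (b l)" i] i by simp
qed

lemma b_indep_sub: "I \<subseteq> {..<k} \<Longrightarrow> fv.independent (b ` I)"
  by (rule fv.independent_mono[OF b_indep image_mono])

lemma Kset_subspace: "fv.subspace (Kset A :: ('v \<Rightarrow> 'c::field) set)"
  unfolding fv.subspace_def
proof (intro conjI ballI allI)
  show "0 \<in> (Kset A :: ('v \<Rightarrow> 'c::field) set)" unfolding Kset_def by (simp add: supported_on_def)
next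
  fix x y :: "'v \<Rightarrow> 'c" assume x: "x \<in> Kset A" and y: "y \<in> Kset A"
  have sx: "supported_on x Vm" and cx: "\<And>v w w'. v \<in> A \<Longrightarrow> (v, w) \<in> E \<Longrightarrow> (v, w') \<in> E \<Longrightarrow> x w = x w'"
    using x unfolding Kset_def by blast+
  have sy: "supported_on y Vm" and cy: "\<And>v w w'. v \<in> A \<Longrightarrow> (v, w) \<in> E \<Longrightarrow> (v, w') \<in> E \<Longrightarrow> y w = y w'"
    using y unfolding Kset_def by blast+
  show "x + y \<in> Kset A" unfolding Kset_def mem_Collect_eq
  proof (intro conjI ballI allI impI)
    show "supported_on (x + y) Vm" using sx sy unfolding supported_on_def plus_fun_def
      by (metis add.right_neutral)
  next
    fix v w w' assume "v \<in> A" "(v, w) \<in> E" "(v, w') \<in> E"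
    then show "(x + y) w = (x + y) w'" using cx[of v w w'] cy[of v w w'] by simp
  qed
next
  fix c and x :: "'v \<Rightarrow> 'c" assume x: "x \<in> Kset A"
  have sx: "supported_on x Vm" and cx: "\<And>v w w'. v \<in> A \<Longrightarrow> (v, w) \<in> E \<Longrightarrow> (v, w') \<in> E \<Longrightarrow> x w = x w'"
    using x unfolding Kset_def by blast+
  show "(\<lambda>v. c * x v) \<in> Kset A" unfolding Kset_def mem_Collect_eq
  proof (intro conjI ballI allI impI)
    show "supported_on (\<lambda>v. c * x v) Vm" using sx unfolding supported_on_def by auto
  next
    fix v w w' assume "v \<in> A" "(v, w) \<in> E" "(v, w') \<in> E"
    then show "c * x w = c * x w'" using cx[of v w w'] by simp
  qed
qed

lemma kap_subspace: "supported_on x Vn \<Longrightarrow> fv.subspace (kap x)"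
  using kappa_char Kset_subspace by metis

lemma kap_span: "kap x \<subseteq> fv.span (delta ` Vm)"
  using supp_span finVm by (auto simp: kappa_def)

lemma Kset_anti: "A \<subseteq> B \<Longrightarrow> Kset B \<subseteq> Kset A"
  unfolding Kset_def by blast

lemma F1:
  assumes x: "supported_on x Vn" and u: "x u \<noteq> 0"
  shows "kap x \<subseteq> kap (delta u)" "fv.dim (kap x) \<le> d u"
proof -
  have uV: "u \<in> Vn" using x u by (simp add: supported_on_def)
  have "kap x = Kset {v. x v \<noteq> 0}" by (rule kappa_char[OF x])
  also have "\<dots> \<subseteq> Kset {u}" using u by (intro Kset_anti) auto
  also have "\<dots> = kap (delta u)" using kappa_delta[OF uV, where 'a='a] by simp
  finally show s: "kap x \<subseteq> kap (delta u)" .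
  show "fv.dim (kap x) \<le> d u" unfolding d_def using D1[OF s kap_span] finVm by simp
qed

lemma kap_b_subspace: "i < k \<Longrightarrow> fv.subspace (kap (b i))"
  by (rule kap_subspace[OF b_supp])

lemma notinspan: "i < k \<Longrightarrow> b i \<notin> fv.span (b ` {..<i})"
proof
  assume i: "i < k" and bi: "b i \<in> fv.span (b ` {..<i})"
  have "b ` {..<i} \<subseteq> b ` {..<k} - {b i}"
    using i b_inj by (auto simp: inj_on_def)
  then have "b i \<in> fv.span (b ` {..<k} - {b i})" using bi fv.span_mono by blast
  then have "fv.dependent (b ` {..<k})" unfolding fv.dependent_def using i by blast
  then show False using b_indep by simp
qed

lemma b_span_supp: "i < k \<Longrightarrow> b i \<in> fv.span (delta ` {u\<in>Vn. b i u \<noteq> 0})"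
  by (rule supp_span) (use b_supp finVn in \<open>auto simp: supported_on_def\<close>)

lemma F2: "i < k \<Longrightarrow> \<exists>u\<in>Vn. b i u \<noteq> 0 \<and> kap (b i) = kap (delta u)"
proof -
  assume i: "i < k"
  have "\<exists>u\<in>Vn. b i u \<noteq> 0 \<and> \<not> in_lin_span (delta u) b i"
  proof (rule ccontr)
    assume "\<not> ?thesis"
    then have "delta ` {u\<in>Vn. b i u \<noteq> 0} \<subseteq> fv.span (b ` {..<i})"
      by (auto simp: lin_span_iff)
    then have "fv.span (delta ` {u\<in>Vn. b i u \<noteq> 0}) \<subseteq> fv.span (b ` {..<i})"
      by (rule fv.span_minimal) simp
    then show False using b_span_supp[OF i] notinspan[OF i] by blast
  qed
  then obtain u where u: "u \<in> Vn" "b i u \<noteq> 0" "\<not> in_lin_span (delta u) b i" by blast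
  have le1: "d u \<le> fv.dim (kap (b i))" by (rule hyp'[OF i u(1) u(3)])
  have s: "kap (b i) \<subseteq> kap (delta u)" and le2: "fv.dim (kap (b i)) \<le> d u"
    using F1[OF b_supp[OF i] u(2)] by auto
  have "kap (delta u) \<subseteq> kap (b i)"
    by (rule D2[OF s kap_span finite_imageI[OF finVm] _ kap_b_subspace[OF i]]) (use le1 d_def in simp)
  then show ?thesis using s u by blast
qed

lemma P2:
  assumes i: "i < card {w\<in>Vn. t \<le> d w}"
  shows "t \<le> fv.dim (kap (b i))"
proof -
  let ?Vt = "{w\<in>Vn. t \<le> d w}"
  have "card ?Vt \<le> k" using finVn by (intro card_mono) auto
  then have ik: "i < k" using i by simp
  have "\<exists>a\<in>?Vt. \<not> in_lin_span (delta a) b i"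
  proof (rule ccontr)
    assume "\<not> ?thesis"
    then have sub: "delta ` ?Vt \<subseteq> fv.span (b ` {..<i})" by (auto simp: lin_span_iff)
    have "fv.independent (delta ` ?Vt :: ('v \<Rightarrow> 'a) set)" by (rule indep_delta) (use finVn in simp)
    then have "card (delta ` ?Vt :: ('v \<Rightarrow> 'a) set) \<le> card (b ` {..<i})"
      using fv.independent_span_bound[OF _ _ sub] by simp
    also have "\<dots> \<le> i" using card_image_le[of "{..<i}" b] by simp
    finally have "card ?Vt \<le> i"
      by (simp add: card_image inj_on_subset[OF delta_inj])
    then show False using i by simp
  qed
  then obtain a where a: "a \<in> Vn" "t \<le> d a" "\<not> in_lin_span (delta a) b i" by blast
  then show ?thesis using hyp'[OF ik a(1) a(3)] by simp
qed

lemma supp_bi: "i < k \<Longrightarrow> b i w \<noteq> 0 \<Longrightarrow> w \<in> Vn"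
  using b_supp by (simp add: supported_on_def)

lemma count:
  assumes u0: "u0 \<in> Vn"
  shows "card {i\<in>{..<k}. kap (b i) = kap (delta u0)} \<le> card {u\<in>Vn. kap (delta u) = kap (delta u0)}"
proof -
  let ?p = "kap (delta u0)"
  let ?t = "d u0"
  let ?IC = "{i\<in>{..<k}. kap (b i) = ?p}"
  let ?IG = "{i\<in>{..<k}. ?t < fv.dim (kap (b i))}"
  let ?C = "{u\<in>Vn. kap (delta u) = ?p}"
  let ?UG = "{w\<in>Vn. ?t < d w}"
  have finUG: "finite ?UG" using finVn by simp
  have finC: "finite ?C" using finVn by simp
  have a: "card ?UG \<le> card ?IG"
  proof -
    have eq: "?UG = {w\<in>Vn. Suc ?t \<le> d w}" by auto
    have "card ?UG \<le> k" using finVn by (intro card_mono) auto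
    have "{..<card ?UG} \<subseteq> ?IG"
    proof
      fix i assume "i \<in> {..<card ?UG}"
      then have "i < card {w\<in>Vn. Suc ?t \<le> d w}" using eq by simp
      then have "Suc ?t \<le> fv.dim (kap (b i))" by (rule P2)
      then show "i \<in> ?IG" using \<open>i \<in> {..<card ?UG}\<close> \<open>card ?UG \<le> k\<close> by auto
    qed
    then show ?thesis using card_mono[of ?IG "{..<card ?UG}"] by simp
  qed
  have sub: "\<And>i w. i \<in> ?IC \<union> ?IG \<Longrightarrow> b i w \<noteq> 0 \<Longrightarrow> w \<in> ?C \<union> ?UG"
  proof -
    fix i w assume i: "i \<in> ?IC \<union> ?IG" and w: "b i w \<noteq> 0"
    have ik: "i < k" using i by auto
    have wV: "w \<in> Vn" using supp_bi[OF ik w] .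
    have s: "kap (b i) \<subseteq> kap (delta w)" and le: "fv.dim (kap (b i)) \<le> d w"
      using F1[OF b_supp[OF ik] w] by auto
    show "w \<in> ?C \<union> ?UG"
    proof (cases "i \<in> ?IC")
      case True
      then have pi: "kap (b i) = ?p" by simp
      show ?thesis
      proof (cases "?t < d w")
        case True then show ?thesis using wV by simp
      next
        case False
        then have "fv.dim (kap (delta w)) \<le> fv.dim ?p" by (simp add: d_def)
        moreover have "fv.subspace ?p" by (rule kap_subspace[OF delta_supp[OF u0]])
        ultimately have "kap (delta w) \<subseteq> ?p"
          using D2[OF _ kap_span finite_imageI[OF finVm]] s pi by blast
        then have "kap (delta w) = ?p" using s pi by blast
        then show ?thesis using wV by simp
      qed
    next
      case False
      then have "i \<in> ?IG" using i by blast
      then have "?t < d w" using le by simp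
      then show ?thesis using wV by simp
    qed
  qed
  have disj: "?IC \<inter> ?IG = {}" by (auto simp: d_def)
  have span: "b ` (?IC \<union> ?IG) \<subseteq> fv.span (delta ` (?C \<union> ?UG))"
  proof
    fix x assume "x \<in> b ` (?IC \<union> ?IG)"
    then obtain i where i: "i \<in> ?IC \<union> ?IG" "x = b i" by blast
    have "supported_on (b i) (?C \<union> ?UG)" using sub[OF i(1)] by (auto simp: supported_on_def)
    then show "x \<in> fv.span (delta ` (?C \<union> ?UG))" using i finC finUG by (simp add: supp_span)
  qed
  have ind: "fv.independent (b ` (?IC \<union> ?IG))" by (rule b_indep_sub) auto
  have "card (b ` (?IC \<union> ?IG)) \<le> card (delta ` (?C \<union> ?UG) :: ('v \<Rightarrow> 'a) set)"
    using fv.independent_span_bound[OF _ ind span] finC finUG by simp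
  also have "\<dots> \<le> card (?C \<union> ?UG)" by (rule card_image_le) (use finC finUG in simp)
  also have "\<dots> \<le> card ?C + card ?UG" by (rule card_Un_le)
  finally have "card (b ` (?IC \<union> ?IG)) \<le> card ?C + card ?UG" .
  moreover have "card (b ` (?IC \<union> ?IG)) = card ?IC + card ?IG"
  proof -
    have "card (b ` (?IC \<union> ?IG)) = card (?IC \<union> ?IG)"
      by (rule card_image, rule inj_on_subset[OF b_inj]) auto
    also have "\<dots> = card ?IC + card ?IG" using disj by (intro card_Un_disjoint) auto
    finally show ?thesis .
  qed
  ultimately show ?thesis using a by simp
qed

lemma fibers: "card {u\<in>Vn. kap (delta u) = c} = card {i\<in>{..<k}. kap (b i) = c}"
proof -
  let ?P = "(\<lambda>u. kap (delta u)) ` Vn"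
  have finP: "finite ?P" using finVn by simp
  have qP: "(\<lambda>i. kap (b i)) ` {..<k} \<subseteq> ?P" using F2 by force
  have s1: "card {..<k} = (\<Sum>c\<in>?P. card {i\<in>{..<k}. kap (b i) = c})"
    by (rule card_fibers[OF _ finP qP]) simp
  have s2: "card Vn = (\<Sum>c\<in>?P. card {u\<in>Vn. kap (delta u) = c})"
    by (rule card_fibers[OF finVn finP]) simp
  have le: "\<And>c. c \<in> ?P \<Longrightarrow> card {i\<in>{..<k}. kap (b i) = c} \<le> card {u\<in>Vn. kap (delta u) = c}"
    using count by blast
  show ?thesis
  proof (cases "c \<in> ?P")
    case True
    have eq: "(\<Sum>c\<in>?P. card {i\<in>{..<k}. kap (b i) = c}) = (\<Sum>c\<in>?P. card {u\<in>Vn. kap (delta u) = c})"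
      using s1 s2 by simp
    show ?thesis
      using sum_le_eq[where f="\<lambda>c. card {i\<in>{..<k}. kap (b i) = c}" and g="\<lambda>c. card {u\<in>Vn. kap (delta u) = c}",
          OF finP le eq True] by simp
  next
    case False
    have e1: "{u\<in>Vn. kap (delta u) = c} = {}" using False by auto
    have e2: "{i\<in>{..<k}. kap (b i) = c} = {}" using False qP by auto
    show ?thesis unfolding e1 e2 by simp
  qed
qed

lemma bij_h: "\<exists>h. bij_betw h Vn {..<k} \<and> (\<forall>u\<in>Vn. kap (b (h u)) = kap (delta u))"
  using fiber_bij[where f="\<lambda>u. kap (delta u)" and g="\<lambda>i. kap (b i)", OF finVn finite_lessThan] fibers by simp

end


lemma emb_lin:
  fixes c :: "'i \<Rightarrow> 'a::field" and e :: "'i \<Rightarrow> 'v \<Rightarrow> 'a"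
  shows "(\<lambda>u. \<Sum>y\<in>S. c y * emb (e y) u) = emb (\<lambda>z. \<Sum>y\<in>S. c y * e y z)"
proof (rule ext)
  fix u :: "'v list"
  show "(\<Sum>y\<in>S. c y * emb (e y) u) = emb (\<lambda>z. \<Sum>y\<in>S. c y * e y z) u"
  proof (cases u)
    case Nil then show ?thesis by (simp add: emb_def)
  next
    case (Cons x r)
    then show ?thesis by (cases r) (simp_all add: emb_def)
  qed
qed

context LGB
begin

definition hh :: "'v \<Rightarrow> nat" where
  "hh = (SOME h. bij_betw h Vn {..<k} \<and> (\<forall>u\<in>Vn. kap (b (h u)) = kap (delta u)))"

lemma hh: "bij_betw hh Vn {..<k}" "\<And>u. u \<in> Vn \<Longrightarrow> kap (b (hh u)) = kap (delta u)"
proof -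
  have "bij_betw hh Vn {..<k} \<and> (\<forall>u\<in>Vn. kap (b (hh u)) = kap (delta u))"
    unfolding hh_def by (rule someI_ex[OF bij_h])
  then show "bij_betw hh Vn {..<k}" "\<And>u. u \<in> Vn \<Longrightarrow> kap (b (hh u)) = kap (delta u)" by auto
qed

lemma hh_lt: "u \<in> Vn \<Longrightarrow> hh u < k"
  using hh(1) by (auto simp: bij_betw_def)

lemma bhh_inj: "inj_on (\<lambda>u. b (hh u)) Vn"
proof -
  have "inj_on hh Vn" using hh(1) by (simp add: bij_betw_def)
  moreover have "inj_on b (hh ` Vn)" using b_inj hh(1) by (simp add: bij_betw_def)
  ultimately show ?thesis using comp_inj_on[of hh Vn b] by (simp add: o_def)
qed

definition Up :: "'v \<Rightarrow> 'v set" where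
  "Up w = {x\<in>Vn. kap (delta w) \<subseteq> kap (delta x) \<and> b = b}"

lemma Up_def': "Up w = {x\<in>Vn. kap (delta w) \<subseteq> kap (delta x)}"
  by (simp add: Up_def)

lemma Up_sub: "Up w \<subseteq> Vn" by (auto simp: Up_def')

lemma L6: "x \<in> Up w \<Longrightarrow> supported_on (b (hh x)) (Up w)"
proof -
  assume x: "x \<in> Up w"
  then have xV: "x \<in> Vn" by (simp add: Up_def')
  have bs: "supported_on (b (hh x)) Vn" by (rule b_supp[OF hh_lt[OF xV]])
  show ?thesis unfolding supported_on_def
  proof (intro allI impI)
    fix y assume y: "b (hh x) y \<noteq> 0"
    then have yV: "y \<in> Vn" using bs by (simp add: supported_on_def)
    have "kap (b (hh x)) \<subseteq> kap (delta y)" using F1(1)[OF bs y] .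
    then have "kap (delta x) \<subseteq> kap (delta y)" using hh(2)[OF xV] by simp
    then show "y \<in> Up w" using x yV by (auto simp: Up_def')
  qed
qed

lemma L7:
  assumes w: "w \<in> Vn"
  shows "\<exists>\<gamma>. supported_on \<gamma> (Up w) \<and> (\<forall>z. delta w z = (\<Sum>y\<in>Vn. \<gamma> y * b (hh y) z))"
proof -
  let ?U = "Up w"
  let ?B = "(\<lambda>u. b (hh u)) ` ?U"
  have finU: "finite ?U" using finVn Up_sub by (rule finite_subset[rotated])
  have injU: "inj_on (\<lambda>u. b (hh u)) ?U" using bhh_inj Up_sub by (rule inj_on_subset)
  have indB: "fv.independent ?B"
  proof -
    have "?B = b ` (hh ` ?U)" by auto
    moreover have "hh ` ?U \<subseteq> {..<k}" using hh_lt Up_sub by auto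
    ultimately show ?thesis using b_indep_sub by simp
  qed
  have BT: "?B \<subseteq> fv.span (delta ` ?U)"
    using L6 finU supp_span by blast
  have indT: "fv.independent (delta ` ?U :: ('v \<Rightarrow> 'a) set)" by (rule indep_delta[OF finU])
  have "card (delta ` ?U :: ('v \<Rightarrow> 'a) set) = card ?U"
    by (rule card_image, rule inj_on_subset[OF delta_inj]) simp
  also have "\<dots> = card ?B" using card_image[OF injU] by simp
  finally have c: "card (delta ` ?U :: ('v \<Rightarrow> 'a) set) \<le> card ?B" by simp
  have "delta ` ?U \<subseteq> fv.span ?B" by (rule D4[OF indB BT _ indT c]) (use finU in simp)
  moreover have "w \<in> ?U" using w by (simp add: Up_def')
  ultimately have "delta w \<in> fv.span ?B" by blast
  then obtain u where u: "delta w = (\<Sum>v\<in>?B. (\<lambda>z. u v * v z))"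
    using fv.span_finite[of ?B] finU by auto
  define \<gamma> where "\<gamma> y = (if y \<in> ?U then u (b (hh y)) else 0)" for y
  have "supported_on \<gamma> ?U" by (simp add: \<gamma>_def supported_on_def)
  moreover have "\<forall>z. delta w z = (\<Sum>y\<in>Vn. \<gamma> y * b (hh y) z)"
  proof
    fix z
    have "(\<Sum>y\<in>Vn. \<gamma> y * b (hh y) z) = (\<Sum>y\<in>?U. u (b (hh y)) * b (hh y) z)"
      by (rule sum.mono_neutral_cong_right) (use finVn Up_sub in \<open>auto simp: \<gamma>_def\<close>)
    also have "\<dots> = (\<Sum>v\<in>?B. u v * v z)" by (rule sum.reindex[OF injU, symmetric, unfolded o_def])
    also have "\<dots> = delta w z" unfolding u fsum_apply by simp
    finally show "delta w z = (\<Sum>y\<in>Vn. \<gamma> y * b (hh y) z)" by simp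
  qed
  ultimately show ?thesis by blast
qed

definition gam :: "'v \<Rightarrow> 'v \<Rightarrow> 'a" where
  "gam w = (SOME \<gamma>. supported_on \<gamma> (Up w) \<and> (\<forall>z. delta w z = (\<Sum>y\<in>Vn. \<gamma> y * b (hh y) z)))"

lemma gam: "w \<in> Vn \<Longrightarrow> supported_on (gam w) (Up w) \<and> (\<forall>z. delta w z = (\<Sum>y\<in>Vn. gam w y * b (hh y) z))"
  unfolding gam_def by (rule someI_ex[OF L7])

definition phi :: "'v \<Rightarrow> 'v \<Rightarrow> 'a" where "phi v = b (hh v)"

lemma good_phi: "good phi"
  unfolding good_def phi_def using b_supp hh_lt hh(2) by auto

lemma good_gam: "good gam"
  unfolding good_def
proof (intro ballI conjI)
  fix v assume v: "v \<in> Vn"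
  have sg: "supported_on (gam v) (Up v)" using gam[OF v] by blast
  then show sV: "supported_on (gam v) Vn" using Up_sub by (auto simp: supported_on_def)
  show "kappa V lev E n (delta v) \<subseteq> kappa V lev E n (gam v)"
  proof
    fix c :: "'v \<Rightarrow> 'a" assume c: "c \<in> kappa V lev E n (delta v)"
    then have sc: "supported_on c Vm" by (simp add: kappa_def)
    have "\<forall>x\<in>{y. gam v y \<noteq> 0}. c \<in> Kset {x}"
    proof
      fix x assume "x \<in> {y. gam v y \<noteq> 0}"
      then have "x \<in> Up v" using sg by (simp add: supported_on_def)
      then have "x \<in> Vn" "kap (delta v) \<subseteq> kap (delta x)" by (auto simp: Up_def')
      then show "c \<in> Kset {x}" using c kappa_delta[of x, where 'a='a] by auto
    qed
    then have "c \<in> Kset {y. gam v y \<noteq> 0}" using sc Kset_iff by blast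
    then show "c \<in> kappa V lev E n (gam v)" using kappa_char[OF sV] by simp
  qed
qed

lemma I1: "w \<in> Vn \<Longrightarrow> (\<Sum>y\<in>Vn. gam w y * phi y z) = delta w z"
  using gam by (simp add: phi_def)

lemma Finj:
  assumes "\<And>z. (\<Sum>y\<in>Vn. c y * phi y z) = 0" "y \<in> Vn"
  shows "c y = 0"
proof -
  define \<alpha> where "\<alpha> i = c (inv_into Vn hh i)" for i
  have "\<forall>z. (\<Sum>i<k. \<alpha> i * b i z) = 0"
  proof
    fix z
    have "(\<Sum>i<k. \<alpha> i * b i z) = (\<Sum>y\<in>Vn. \<alpha> (hh y) * b (hh y) z)"
      using sum.reindex_bij_betw[OF hh(1), of "\<lambda>i. \<alpha> i * b i z"] by simp
    also have "\<dots> = (\<Sum>y\<in>Vn. c y * phi y z)"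
      using hh(1) by (intro sum.cong) (auto simp: \<alpha>_def phi_def bij_betw_def)
    finally show "(\<Sum>i<k. \<alpha> i * b i z) = 0" using assms(1) by simp
  qed
  then have "\<alpha> (hh y) = 0" using b_indep0 hh_lt[OF assms(2)] by blast
  then show ?thesis using hh(1) assms(2) by (simp add: \<alpha>_def bij_betw_def)
qed

lemma phi_supp: "v \<in> Vn \<Longrightarrow> supported_on (phi v) Vn"
  using b_supp hh_lt by (simp add: phi_def)

lemma gam_supp: "v \<in> Vn \<Longrightarrow> supported_on (gam v) Vn"
  using good_gam by (simp add: good_def)

lemma sum_delta_left: "supported_on f Vn \<Longrightarrow> (\<Sum>y\<in>Vn. f y * delta y x) = f x"
proof -
  assume s: "supported_on f Vn"
  have "(\<Sum>y\<in>Vn. f y * delta y x) = (\<Sum>y\<in>Vn. if y = x then f x else 0)"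
    by (intro sum.cong) (auto simp: delta_def)
  also have "\<dots> = f x" using s finVn by (auto simp: supported_on_def)
  finally show ?thesis .
qed

lemma I2:
  assumes v: "v \<in> Vn"
  shows "(\<Sum>y\<in>Vn. phi v y * gam y z) = delta v z"
proof -
  define e where "e z = (\<Sum>y\<in>Vn. phi v y * gam y z)" for z
  define c where "c z = e z - delta v z" for z
  have A: "(\<Sum>x\<in>Vn. e x * phi x t) = phi v t" for t
  proof -
    have "(\<Sum>x\<in>Vn. e x * phi x t) = (\<Sum>x\<in>Vn. \<Sum>y\<in>Vn. phi v y * gam y x * phi x t)"
      unfolding e_def by (simp add: sum_distrib_right)
    also have "\<dots> = (\<Sum>y\<in>Vn. \<Sum>x\<in>Vn. phi v y * gam y x * phi x t)"
      by (rule sum.swap)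
    also have "\<dots> = (\<Sum>y\<in>Vn. phi v y * (\<Sum>x\<in>Vn. gam y x * phi x t))"
      by (simp add: sum_distrib_left mult.assoc)
    also have "\<dots> = (\<Sum>y\<in>Vn. phi v y * delta y t)" by (intro sum.cong refl) (simp add: I1)
    also have "\<dots> = phi v t" by (rule sum_delta_left[OF phi_supp[OF v]])
    finally show ?thesis .
  qed
  have B: "(\<Sum>x\<in>Vn. delta v x * phi x t) = phi v t" for t
  proof -
    have "(\<Sum>x\<in>Vn. delta v x * phi x t) = (\<Sum>x\<in>Vn. if x = v then phi v t else 0)"
      by (intro sum.cong) (auto simp: delta_def)
    also have "\<dots> = phi v t" using v finVn by simp
    finally show ?thesis .
  qed
  have "(\<Sum>x\<in>Vn. c x * phi x t) = 0" for t
    using A[of t] B[of t] by (simp add: c_def left_diff_distrib sum_subtractf)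
  then have cz: "\<And>x. x \<in> Vn \<Longrightarrow> c x = 0" using Finj by blast
  show ?thesis
  proof (cases "z \<in> Vn")
    case True then show ?thesis using cz[OF True] by (simp add: c_def e_def)
  next
    case False
    then have "\<And>y. y \<in> Vn \<Longrightarrow> gam y z = 0" using gam_supp by (auto simp: supported_on_def)
    then show ?thesis using False v by (auto simp: delta_def)
  qed
qed

abbreviation "ff \<equiv> Fmap phi"
abbreviation "gg \<equiv> Fmap gam"

lemma subst_emb:
  assumes g: "good \<psi>" and s: "supported_on \<beta> Vn"
  shows "subst (Fmap \<psi>) (emb \<beta>) = emb (\<lambda>z. \<Sum>y\<in>Vn. \<beta> y * \<psi> y z)"
proof -
  have "subst (Fmap \<psi>) (emb \<beta>) = subst (Fmap \<psi>) (\<lambda>u. \<Sum>y\<in>Vn. \<beta> y * mon [y] u)"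
    by (simp add: emb_expand[OF s finVn])
  also have "\<dots> = (\<lambda>u. \<Sum>y\<in>Vn. \<beta> y * subst (Fmap \<psi>) (mon [y]) u)"
    by (rule subst_lin) (simp_all add: finVn tsupp_mon)
  also have "\<dots> = (\<lambda>u. \<Sum>y\<in>Vn. \<beta> y * emb (\<psi> y) u)"
    by (intro ext sum.cong refl) (simp add: subst_letter F_top)
  also have "\<dots> = emb (\<lambda>z. \<Sum>y\<in>Vn. \<beta> y * \<psi> y z)" by (rule emb_lin)
  finally show ?thesis .
qed

lemma comp_gf: "a \<in> V \<Longrightarrow> 1 \<le> lev a \<Longrightarrow> lev a \<le> n \<Longrightarrow> subst gg (ff a) = mon [a]"
proof -
  assume a: "a \<in> V" "1 \<le> lev a" "lev a \<le> n"
  show ?thesis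
  proof (cases "lev a < n")
    case True then show ?thesis using a by (simp add: F_low subst_letter)
  next
    case False
    then have aV: "a \<in> Vn" using a by (simp add: layer_def)
    have "subst gg (ff a) = emb (\<lambda>z. \<Sum>y\<in>Vn. phi a y * gam y z)"
      by (simp add: F_top[OF aV] subst_emb[OF good_gam phi_supp[OF aV]])
    also have "\<dots> = emb (delta a)" by (simp add: I2[OF aV])
    finally show ?thesis by (simp add: emb_delta)
  qed
qed

lemma comp_fg: "a \<in> V \<Longrightarrow> 1 \<le> lev a \<Longrightarrow> lev a \<le> n \<Longrightarrow> subst ff (gg a) = mon [a]"
proof -
  assume a: "a \<in> V" "1 \<le> lev a" "lev a \<le> n"
  show ?thesis
  proof (cases "lev a < n")
    case True then show ?thesis using a by (simp add: F_low subst_letter)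
  next
    case False
    then have aV: "a \<in> Vn" using a by (simp add: layer_def)
    have "subst ff (gg a) = emb (\<lambda>z. \<Sum>y\<in>Vn. gam a y * phi y z)"
      by (simp add: F_top[OF aV] subst_emb[OF good_phi gam_supp[OF aV]])
    also have "\<dots> = emb (delta a)" by (simp add: I1[OF aV])
    finally show ?thesis by (simp add: emb_delta)
  qed
qed

lemma TA_letters: "x \<in> TA V lev n \<Longrightarrow> w \<in> tsupp x \<Longrightarrow> a \<in> set w \<Longrightarrow> a \<in> V \<and> 1 \<le> lev a \<and> lev a \<le> n"
  by (auto simp: TA_def)

theorem main: "upper_vertex_like V lev E n b"
  unfolding upper_vertex_like_def
proof (intro exI[of _ ff] conjI ballI impI)
  fix v assume "v \<in> V" "1 \<le> lev v \<and> lev v < n"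
  then show "ff v = mon [v]" by (simp add: F_low)
next
  fix v assume v: "v \<in> Vn"
  show "\<exists>c. supported_on c Vn \<and> ff v = emb c"
    using phi_supp[OF v] F_top[OF v] by blast
next
  fix x :: "'v list \<Rightarrow> 'a" assume "x \<in> TA V lev n" "x \<in> RB V lev E"
  then show "subst ff x \<in> RB V lev E" using hom_RB[OF good_phi] by blast
next
  fix x :: "'v list \<Rightarrow> 'a" assume x: "x \<in> TA V lev n" and r: "subst ff x \<in> RB V lev E"
  have finx: "finite (tsupp x)" using x by (simp add: TA_def)
  have "subst gg (subst ff x) \<in> RB V lev E" using hom_RB[OF good_gam] r by blast
  moreover have "subst gg (subst ff x) = subst (\<lambda>a. subst gg (ff a)) x"
    by (rule subst_comp[OF finx fin_F[OF good_phi]])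
  moreover have "subst (\<lambda>a. subst gg (ff a)) x = x"
    by (rule subst_id[OF finx]) (use TA_letters[OF x] comp_gf in blast)
  ultimately show "x \<in> RB V lev E" by simp
next
  fix y :: "'v list \<Rightarrow> 'a" assume y: "y \<in> TA V lev n"
  have finy: "finite (tsupp y)" using y by (simp add: TA_def)
  let ?x = "subst gg y"
  have "?x \<in> TA V lev n" by (rule TA_subst[OF y F_TA[OF good_gam]])
  moreover have "subst ff ?x = y"
  proof -
    have "subst ff ?x = subst (\<lambda>a. subst ff (gg a)) y"
      by (rule subst_comp[OF finy fin_F[OF good_gam]])
    also have "\<dots> = y"
      by (rule subst_id[OF finy]) (use TA_letters[OF y] comp_fg in blast)
    finally show ?thesis .
  qed
  ultimately show "\<exists>x\<in>TA V lev n. (\<lambda>u. subst ff x u - y u) \<in> RB V lev E"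
    using RB.zero by (intro bexI[of _ ?x]) simp_all
next
  have "ff ` Vn = emb ` (\<lambda>v. b (hh v)) ` Vn"
    by (auto simp: F_top phi_def image_iff)
  also have "(\<lambda>v. b (hh v)) ` Vn = b ` hh ` Vn" by auto
  also have "hh ` Vn = {..<k}" using hh(1) by (simp add: bij_betw_def)
  finally show "ff ` Vn = emb ` b ` {..<k}" .
qed

end


theorem mainTheorem14:
  fixes V :: "'v set" and lev :: "'v \<Rightarrow> nat" and E :: "('v \<times> 'v) set"
    and n :: nat and b :: "nat \<Rightarrow> 'v \<Rightarrow> 'a::field"
  assumes "layered_graph V lev E"
    and "uniform V lev E"
    and "card (layer V lev 0) = 1"
    and "2 \<le> n"
    and "is_basis_Bn V lev n b"
    and "\<forall>i < card (layer V lev n). \<forall>a \<in> layer V lev n.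
           \<not> in_lin_span (delta a) b i \<longrightarrow>
           fdim (kappa V lev E n (delta a)) \<le> fdim (kappa V lev E n (b i))"
  shows "upper_vertex_like V lev E n b"
proof -
  interpret LG V lev E n using assms(1,4) by unfold_locales
  have h: "\<forall>i < card (layer V lev n). \<forall>a \<in> layer V lev n.
           \<not> in_lin_span (delta a) b i \<longrightarrow>
           fdim (kappa V lev E n (delta a :: 'v \<Rightarrow> 'a)) \<le> fdim (kappa V lev E n (b i))"
  proof (intro allI impI ballI)
    fix i a assume i: "i < card (layer V lev n)" and a: "a \<in> layer V lev n"
      and nl: "\<not> in_lin_span (delta a) b i"
    note le = assms(6)[rule_format, OF i a nl]
    then show "fdim (kappa V lev E n (delta a :: 'v \<Rightarrow> 'a)) \<le> fdim (kappa V lev E n (b i))"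
      by (simp only: dim_kappa_delta[OF a])
  qed
  interpret LGB V lev E n b using assms(5) h by unfold_locales
  show ?thesis by (rule main)
qed

end
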